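(* Assume $k>1$. Then (1) $b=(r+1)\sum_{i=1}^{k-1}(l_i+1)-(p+1)(e-r-1)+h=X+Y+Z$, where $X=(k-1)(r-1)\ge0$, $Y=k-(e-r)\ge0$, and $Z=(r+1)(p+\sum_{i=1}^{k-1}l_i)+k+h-pe-1\ge\sum_{i\in A}(r-r_i)\ge0$; (2) $c=\bigl(p+1+\sum_{i=1}^{k-1}(l_i+1)\bigr)(r+1)-b$.
   Context: Let $(R,\mathfrak m)$ be a one-dimensional local Noetherian domain with quotient field $K$, not regular, analytically irreducible (the integral closure $\overline R$ of $R$ in $K$ is a DVR and a finite $R$-module) and residually rational. Let $v$ be the valuation of $\overline R$ normalized so a uniformizer $t$ has value 1, $v(R)=\{v(a):a\in R\setminus\{0\}\}$, $\mathfrak C=(R:_K\overline R)=t^c\overline R$ with $c$ the least element of $v(R)$ with $c+\mathbb N\subseteq v(R)$, $\delta=\ell_R(\overline R/R)$, $r=\ell_R((R:_K\mathfrak m)/R)$, $b=(c-\delta)r-\delta$, $e$ the least positive element of $v(R)$, $n=c-\delta$. Write $v(R)=\{s_0=0<s_1<\cdots\}$ ($s_n=c$), $R_i=\{a\in R:v(a)\ge s_i\}$, $r_i=\ell_R((R:_KR_i)/(R:_KR_{i-1}))$. Let $i_0\in[1,n]$ be such that $s_{i_0-1}=\min\{y\in v(R):y\ge c-e\}$, $B=\{i_0,\dots,n\}$, $A=\{1,\dots,n\}\setminus B$. Let $x\in\mathfrak m$ with $v(x)=e$ and $k=\ell_R(R/(\mathfrak C+xR))$. When $k>1$: $p$ is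 the integer with $c-e\le pe<c$, $h=(p+1)e-c$; $y_1<\dots<y_{k-1}$ are the nonzero elements of $v(R)\setminus v(\mathfrak C+xR)$ (equivalently, the $y\in v(R)$ with $0<y<c$ and $y-e\notin v(R)$; they are not multiples of $e$, exceed $e$, and have distinct residues mod $e$); $l_i\ge0$ is the integer with $y_i+l_ie<c\le y_i+(l_i+1)e$. Then $v(R)$ is the disjoint union of $\{0,e,\dots,pe\}$, $\{m\ge c\}$ and the sets $\{y_i,y_i+e,\dots,y_i+l_ie\}$. *)

theory Defs
  imports "HOL-Computational_Algebra.Polynomial"
begin

text \<open>The quotient field K is a type 'k of class field (K = UNIV). The valuation v of the DVR is a map 'k => int;
  its value at 0 is irrelevant and "v(z) >= s" for z = 0 is read as true.\<close>

definition subring :: "'k::field set \<Rightarrow> bool" where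
  "subring R \<longleftrightarrow> 0 \<in> R \<and> 1 \<in> R \<and> (\<forall>a\<in>R. \<forall>b\<in>R. a + b \<in> R \<and> a * b \<in> R \<and> - a \<in> R)"

definition is_ideal :: "'k::field set \<Rightarrow> 'k set \<Rightarrow> bool" where
  "is_ideal R I \<longleftrightarrow> I \<subseteq> R \<and> 0 \<in> I \<and> (\<forall>a\<in>I. \<forall>b\<in>I. a + b \<in> I) \<and> (\<forall>r\<in>R. \<forall>a\<in>I. r * a \<in> I)"

definition is_prime_ideal :: "'k::field set \<Rightarrow> 'k set \<Rightarrow> bool" where
  "is_prime_ideal R P \<longleftrightarrow> is_ideal R P \<and> P \<noteq> R \<and> (\<forall>a\<in>R. \<forall>b\<in>R. a * b \<in> P \<longrightarrow> a \<in> P \<or> b \<in> P)"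

definition lin_span :: "'k::field set \<Rightarrow> 'k set \<Rightarrow> 'k set" where
  "lin_span R G = {\<Sum>g\<in>G. f g * g | f. \<forall>g\<in>G. f g \<in> R}"

definition noetherian :: "'k::field set \<Rightarrow> bool" where
  "noetherian R \<longleftrightarrow> (\<forall>I. is_ideal R I \<longrightarrow> (\<exists>G. finite G \<and> G \<subseteq> I \<and> I = lin_span R G))"

text \<open>Non-units of R; R is local iff they form an ideal, which is then the maximal ideal m.\<close>
definition max_ideal :: "'k::field set \<Rightarrow> 'k set" where
  "max_ideal R = {a \<in> R. \<not> (\<exists>b\<in>R. a * b = 1)}"

definition local_ring :: "'k::field set \<Rightarrow> bool" where
  "local_ring R \<longleftrightarrow> is_ideal R (max_ideal R)"

text \<open>Krull dimension one (R is a domain, so {0} is prime).\<close>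
definition krull_dim_one :: "'k::field set \<Rightarrow> bool" where
  "krull_dim_one R \<longleftrightarrow> (\<exists>P. is_prime_ideal R P \<and> P \<noteq> {0}) \<and>
     (\<forall>P Q. is_prime_ideal R P \<longrightarrow> is_prime_ideal R Q \<longrightarrow> P \<subset> Q \<longrightarrow> P = {0})"

definition regular_dim_one :: "'k::field set \<Rightarrow> bool" where
  "regular_dim_one R \<longleftrightarrow> (\<exists>x\<in>R. max_ideal R = {x * a | a. a \<in> R})"

definition quotient_field_of :: "'k::field set \<Rightarrow> bool" where
  "quotient_field_of R \<longleftrightarrow> (\<forall>z. \<exists>a\<in>R. \<exists>b\<in>R. b \<noteq> 0 \<and> z = a / b)"

definition integral_closure :: "'k::field set \<Rightarrow> 'k set" where
  "integral_closure R = {z. \<exists>q::'k poly. lead_coeff q = 1 \<and> (\<forall>i. coeff q i \<in> R) \<and> poly q z = 0}"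

definition normalized_dval :: "('k::field \<Rightarrow> int) \<Rightarrow> bool" where
  "normalized_dval v \<longleftrightarrow>
     (\<forall>x y. x \<noteq> 0 \<longrightarrow> y \<noteq> 0 \<longrightarrow> v (x * y) = v x + v y) \<and>
     (\<forall>x y. x \<noteq> 0 \<longrightarrow> y \<noteq> 0 \<longrightarrow> x + y \<noteq> 0 \<longrightarrow> min (v x) (v y) \<le> v (x + y)) \<and>
     (\<exists>t. t \<noteq> 0 \<and> v t = 1)"

definition val_ring :: "('k::field \<Rightarrow> int) \<Rightarrow> 'k set" where
  "val_ring v = {z. z = 0 \<or> 0 \<le> v z}"

definition finite_module :: "'k::field set \<Rightarrow> 'k set \<Rightarrow> bool" where
  "finite_module R M \<longleftrightarrow> (\<exists>G. finite G \<and> G \<subseteq> M \<and> M = lin_span R G)"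

text \<open>Residually rational: R/m = Rbar/t Rbar.\<close>
definition residually_rational :: "'k::field set \<Rightarrow> ('k \<Rightarrow> int) \<Rightarrow> bool" where
  "residually_rational R v \<longleftrightarrow> (\<forall>z \<in> val_ring v. \<exists>a\<in>R. z - a = 0 \<or> 1 \<le> v (z - a))"

text \<open>R-submodules of K and lengths of quotients M/N (N \<subseteq> M): the supremum of the lengths
  of strictly increasing chains of R-submodules from N to M.\<close>
definition submod :: "'k::field set \<Rightarrow> 'k set \<Rightarrow> bool" where
  "submod R M \<longleftrightarrow> 0 \<in> M \<and> (\<forall>x\<in>M. \<forall>y\<in>M. x + y \<in> M) \<and> (\<forall>a\<in>R. \<forall>x\<in>M. a * x \<in> M)"

definition ell :: "'k::field set \<Rightarrow> 'k set \<Rightarrow> 'k set \<Rightarrow> nat" where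
  "ell R N M = Sup {n. \<exists>f :: nat \<Rightarrow> 'k set. f 0 = N \<and> f n = M \<and>
       (\<forall>i<n. f i \<subset> f (Suc i)) \<and> (\<forall>i\<le>n. submod R (f i))}"

definition colon :: "'k::field set \<Rightarrow> 'k set \<Rightarrow> 'k set" where
  "colon R X = {z. \<forall>y\<in>X. z * y \<in> R}"

text \<open>Value set of a subset of K (nonzero elements); values are assumed nonnegative.\<close>
definition vals :: "('k::field \<Rightarrow> int) \<Rightarrow> 'k set \<Rightarrow> nat set" where
  "vals v S = {nat (v z) | z. z \<in> S \<and> z \<noteq> 0}"

definition vR :: "'k::field set \<Rightarrow> ('k \<Rightarrow> int) \<Rightarrow> nat set" where
  "vR R v = vals v R"

definition cond_c :: "'k::field set \<Rightarrow> ('k \<Rightarrow> int) \<Rightarrow> nat" where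
  "cond_c R v = (LEAST c. c \<in> vR R v \<and> (\<forall>m\<ge>c. m \<in> vR R v))"

definition delta :: "'k::field set \<Rightarrow> ('k \<Rightarrow> int) \<Rightarrow> nat" where
  "delta R v = ell R R (val_ring v)"

definition type_r :: "'k::field set \<Rightarrow> nat" where
  "type_r R = ell R R (colon R (max_ideal R))"

definition bnum :: "'k::field set \<Rightarrow> ('k \<Rightarrow> int) \<Rightarrow> int" where
  "bnum R v = (int (cond_c R v) - int (delta R v)) * int (type_r R) - int (delta R v)"

definition mult_e :: "'k::field set \<Rightarrow> ('k \<Rightarrow> int) \<Rightarrow> nat" where
  "mult_e R v = (LEAST y. y \<in> vR R v \<and> 0 < y)"

definition nnum :: "'k::field set \<Rightarrow> ('k \<Rightarrow> int) \<Rightarrow> int" where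
  "nnum R v = int (cond_c R v) - int (delta R v)"

text \<open>s i: the i-th element (from 0) of v(R) in increasing order.\<close>
definition sval :: "'k::field set \<Rightarrow> ('k \<Rightarrow> int) \<Rightarrow> nat \<Rightarrow> nat" where
  "sval R v i = (LEAST y. y \<in> vR R v \<and> card {z \<in> vR R v. z < y} = i)"

definition Rsub :: "'k::field set \<Rightarrow> ('k \<Rightarrow> int) \<Rightarrow> nat \<Rightarrow> 'k set" where
  "Rsub R v i = {a \<in> R. a = 0 \<or> int (sval R v i) \<le> v a}"

definition rr :: "'k::field set \<Rightarrow> ('k \<Rightarrow> int) \<Rightarrow> nat \<Rightarrow> nat" where
  "rr R v i = ell R (colon R (Rsub R v (i - 1))) (colon R (Rsub R v i))"

definition i_zero :: "'k::field set \<Rightarrow> ('k \<Rightarrow> int) \<Rightarrow> nat" where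
  "i_zero R v = (THE i. 1 \<le> i \<and> int i \<le> nnum R v \<and>
      int (sval R v (i - 1)) = int (LEAST y. y \<in> vR R v \<and> int (cond_c R v) - int (mult_e R v) \<le> int y))"

definition setA :: "'k::field set \<Rightarrow> ('k \<Rightarrow> int) \<Rightarrow> nat set" where
  "setA R v = {i. 1 \<le> i \<and> int i \<le> nnum R v} - {i. i_zero R v \<le> i \<and> int i \<le> nnum R v}"

definition CxR :: "'k::field set \<Rightarrow> ('k \<Rightarrow> int) \<Rightarrow> 'k \<Rightarrow> 'k set" where
  "CxR R v x = {a + x * b | a b. a \<in> colon R (val_ring v) \<and> b \<in> R}"

definition knum :: "'k::field set \<Rightarrow> ('k \<Rightarrow> int) \<Rightarrow> 'k \<Rightarrow> nat" where
  "knum R v x = ell R (CxR R v x) R"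

definition pnum :: "'k::field set \<Rightarrow> ('k \<Rightarrow> int) \<Rightarrow> int" where
  "pnum R v = (THE p::int. int (cond_c R v) - int (mult_e R v) \<le> p * int (mult_e R v)
                  \<and> p * int (mult_e R v) < int (cond_c R v))"

definition hnum :: "'k::field set \<Rightarrow> ('k \<Rightarrow> int) \<Rightarrow> int" where
  "hnum R v = (pnum R v + 1) * int (mult_e R v) - int (cond_c R v)"

text \<open>The set {y_1,...,y_(k-1)}: nonzero elements of v(R) not in v(C + xR).\<close>
definition Yset :: "'k::field set \<Rightarrow> ('k \<Rightarrow> int) \<Rightarrow> 'k \<Rightarrow> nat set" where
  "Yset R v x = {y \<in> vR R v. y \<noteq> 0 \<and> y \<notin> vals v (CxR R v x)}"

definition lnum :: "'k::field set \<Rightarrow> ('k \<Rightarrow> int) \<Rightarrow> nat \<Rightarrow> int" where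
  "lnum R v y = (THE l::int. 0 \<le> l \<and> int y + l * int (mult_e R v) < int (cond_c R v)
                  \<and> int (cond_c R v) \<le> int y + (l + 1) * int (mult_e R v))"

end

theory Submission
  imports Defs
begin

locale setting =
  fixes R :: "'k::field set" and v :: "'k \<Rightarrow> int"
  assumes sub: "subring R"
    and dval: "normalized_dval v"
    and intcl: "integral_closure R = val_ring v"
    and resrat: "residually_rational R v"
begin

lemma vmult: "x \<noteq> 0 \<Longrightarrow> y \<noteq> 0 \<Longrightarrow> v (x * y) = v x + v y"
  using dval unfolding normalized_dval_def by blast

lemma vmin: "x \<noteq> 0 \<Longrightarrow> y \<noteq> 0 \<Longrightarrow> x + y \<noteq> 0 \<Longrightarrow> min (v x) (v y) \<le> v (x + y)"
  using dval unfolding normalized_dval_def by blast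

lemma v1: "v 1 = 0"
  using vmult[of 1 1] by simp

lemma vm1: "v (-1) = 0"
  using vmult[of "-1" "-1"] v1 by simp

lemma vneg: "x \<noteq> 0 \<Longrightarrow> v (- x) = v x"
  using vmult[of "-1" x] vm1 by simp

lemma vdiv: "x \<noteq> 0 \<Longrightarrow> y \<noteq> 0 \<Longrightarrow> v (x / y) = v x - v y"
  using vmult[of "x/y" y] by simp

lemma vadd_ge: "x + y \<noteq> 0 \<Longrightarrow> (x = 0 \<or> a \<le> v x) \<Longrightarrow> (y = 0 \<or> a \<le> v y) \<Longrightarrow> a \<le> v (x + y)"
  using vmin[of x y] by (cases "x = 0"; cases "y = 0") auto

lemma vadd_strict: assumes "x \<noteq> 0" "y = 0 \<or> v x < v y" shows "x + y \<noteq> 0 \<and> v (x + y) = v x"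
proof (cases "y = 0")
  case True then show ?thesis using assms by simp
next
  case False
  with assms have lt: "v x < v y" by simp
  have nz: "x + y \<noteq> 0"
  proof
    assume "x + y = 0" then have "y = - x" by (simp add: add_eq_0_iff)
    then show False using lt vneg[OF assms(1)] by simp
  qed
  have "min (v x) (v y) \<le> v (x + y)" using vmin[OF assms(1) False nz] .
  then have ge: "v x \<le> v (x + y)" using lt by simp
  have "x = (x + y) + (- y)" by simp
  have "min (v (x+y)) (v (-y)) \<le> v ((x + y) + (- y))"
    using vmin[OF nz, of "-y"] False assms(1) by simp
  then have "min (v (x+y)) (v y) \<le> v x" using vneg[OF False] by simp
  with lt have "v (x + y) \<le> v x" by linarith
  with ge nz show ?thesis by simp
qed

lemma tex: obtains t where "t \<noteq> 0" "v t = 1"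
  using dval unfolding normalized_dval_def by blast

definition tt where "tt = (SOME t. t \<noteq> 0 \<and> v t = 1)"

lemma tt: "tt \<noteq> 0" "v tt = 1"
  using someI_ex[of "\<lambda>t. t \<noteq> 0 \<and> v t = 1"] tex unfolding tt_def by blast+

lemma vpow: "x \<noteq> 0 \<Longrightarrow> v (x ^ n) = int n * v x"
  by (induction n) (auto simp: v1 vmult algebra_simps)

lemma ttpow: "tt ^ n \<noteq> 0" "v (tt ^ n) = int n"
  using tt vpow[of tt n] by auto

definition VR where "VR = val_ring v"

lemma VR_iff: "z \<in> VR \<longleftrightarrow> z = 0 \<or> 0 \<le> v z"
  unfolding VR_def val_ring_def by simp

lemma R0: "0 \<in> R" and R1: "1 \<in> R" and Radd: "a \<in> R \<Longrightarrow> b \<in> R \<Longrightarrow> a + b \<in> R"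
  and Rmult: "a \<in> R \<Longrightarrow> b \<in> R \<Longrightarrow> a * b \<in> R" and Rneg: "a \<in> R \<Longrightarrow> - a \<in> R"
  using sub unfolding subring_def by auto

lemma Rdiff: "a \<in> R \<Longrightarrow> b \<in> R \<Longrightarrow> a - b \<in> R"
  using Radd[OF _ Rneg] by (simp)

lemma Rpow: "a \<in> R \<Longrightarrow> a ^ n \<in> R"
  by (induction n) (auto intro: R1 Rmult)

lemma R_VR: "R \<subseteq> VR"
proof
  fix a assume a: "a \<in> R"
  let ?q = "[:-a, 1:]"
  have "lead_coeff ?q = 1" by simp
  moreover have "\<forall>i. coeff ?q i \<in> R"
  proof
    fix i show "coeff ?q i \<in> R"
      using a R0 R1 Rneg by (cases i) (auto simp: coeff_pCons split: nat.splits)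
  qed
  moreover have "poly ?q a = 0" by simp
  ultimately have "a \<in> integral_closure R" unfolding integral_closure_def by blast
  then show "a \<in> VR" using intcl VR_def by simp
qed

lemma Rv: "a \<in> R \<Longrightarrow> a \<noteq> 0 \<Longrightarrow> 0 \<le> v a"
  using R_VR VR_iff by blast

lemma resrat': "z \<in> VR \<Longrightarrow> \<exists>a\<in>R. z - a = 0 \<or> 1 \<le> v (z - a)"
  using resrat unfolding residually_rational_def VR_def by blast

end

context setting begin

definition chains where "chains N M = {n. \<exists>f :: nat \<Rightarrow> 'k set. f 0 = N \<and> f n = M \<and>
       (\<forall>i<n. f i \<subset> f (Suc i)) \<and> (\<forall>i\<le>n. submod R (f i))}"

lemma ell_chains: "ell R N M = Sup (chains N M)"
  unfolding ell_def chains_def by simp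

definition Cset where "Cset a = {z. z = 0 \<or> a \<le> v z}"

lemma submodD: assumes "submod R M"
  shows "0 \<in> M" "x \<in> M \<Longrightarrow> y \<in> M \<Longrightarrow> x + y \<in> M" "a \<in> R \<Longrightarrow> x \<in> M \<Longrightarrow> a * x \<in> M"
  using assms unfolding submod_def by auto

lemma submod_neg: "submod R M \<Longrightarrow> x \<in> M \<Longrightarrow> - x \<in> M"
  using submodD(3)[of M "-1" x] Rneg[OF R1] by simp

lemma submod_diff: "submod R M \<Longrightarrow> x \<in> M \<Longrightarrow> y \<in> M \<Longrightarrow> x - y \<in> M"
  using submodD(2)[of M x "-y"] submod_neg[of M y] by simp

lemma vals_mono: "S \<subseteq> T \<Longrightarrow> vals v S \<subseteq> vals v T"
  unfolding vals_def by blast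

lemma valsI: "z \<in> S \<Longrightarrow> z \<noteq> 0 \<Longrightarrow> nat (v z) \<in> vals v S"
  unfolding vals_def by blast

lemma valsE: assumes "g \<in> vals v S" obtains z where "z \<in> S" "z \<noteq> 0" "nat (v z) = g"
  using assms unfolding vals_def by blast

lemma VR_val: "S \<subseteq> VR \<Longrightarrow> z \<in> S \<Longrightarrow> z \<noteq> 0 \<Longrightarrow> int (nat (v z)) = v z"
  using VR_iff by auto

lemma Cset_vals: assumes "Cset (int a) \<subseteq> N" "a \<le> g" shows "g \<in> vals v N"
proof -
  have "tt ^ g \<in> Cset (int a)" using ttpow[of g] assms(2) unfolding Cset_def by simp
  then show ?thesis using valsI[of "tt^g" N] ttpow[of g] assms(1) by auto
qed

lemma fin_diff: assumes "Cset (int a) \<subseteq> N" shows "vals v M - vals v N \<subseteq> {..<a}" "finite (vals v M - vals v N)"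
proof -
  show "vals v M - vals v N \<subseteq> {..<a}"
  proof
    fix g assume "g \<in> vals v M - vals v N"
    then show "g \<in> {..<a}" using Cset_vals[OF assms, of g] by (cases "a \<le> g") auto
  qed
  then show "finite (vals v M - vals v N)" using finite_subset by blast
qed

lemma approx:
  assumes N: "submod R N" and N': "submod R N'" and sub: "N \<subseteq> N'" and VR: "N' \<subseteq> VR"
    and C: "Cset a \<subseteq> N" and vs: "vals v N' \<subseteq> vals v N"
  shows "N' \<subseteq> N"
proof -
  have main: "\<forall>z. z \<in> N' \<longrightarrow> nat (a - v z) = n \<longrightarrow> z \<in> N" for n
  proof (induction n rule: less_induct)
    case (less n)
    show ?case
    proof (intro allI impI)
      fix z assume z: "z \<in> N'" and n: "nat (a - v z) = n"
      show "z \<in> N"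
      proof (cases "z = 0 \<or> a \<le> v z")
        case True then show ?thesis using C unfolding Cset_def by blast
      next
        case False
        then have z0: "z \<noteq> 0" and lt: "v z < a" by auto
        have vz: "0 \<le> v z" using VR z z0 VR_iff by blast
        have "nat (v z) \<in> vals v N" using vs valsI[OF z z0] by blast
        then obtain w where w: "w \<in> N" "w \<noteq> 0" "nat (v w) = nat (v z)" by (rule valsE)
        have "0 \<le> v w" using VR sub w VR_iff by blast
        with vz w have vw: "v w = v z" by simp
        define q where "q = z / w"
        have q0: "q \<noteq> 0" and vq: "v q = 0" using z0 w vdiv[of z w] vw unfolding q_def by auto
        then have "q \<in> VR" using VR_iff by simp
        then obtain a' where a': "a' \<in> R" "q - a' = 0 \<or> 1 \<le> v (q - a')" using resrat' by blast
        have zq: "z = q * w" using w unfolding q_def by simp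
        show "z \<in> N"
        proof (cases "q - a' = 0")
          case True
          then have "z = a' * w" using zq by simp
          then show ?thesis using submodD(3)[OF N a'(1) w(1)] by simp
        next
          case False
          define z' where "z' = w * (q - a')"
          have z'0: "z' \<noteq> 0" using False w unfolding z'_def by simp
          have vz': "v z' = v w + v (q - a')" using vmult[of w "q - a'"] False w unfolding z'_def by simp
          with a' False vw have gt: "v z + 1 \<le> v z'" by simp
          have z'eq: "z' = z + (- a') * w" using zq unfolding z'_def by (simp add: algebra_simps)
          have "w \<in> N'" using w sub by blast
          then have "(- a') * w \<in> N'" using submodD(3)[OF N' Rneg[OF a'(1)]] by blast
          then have "z + (- a') * w \<in> N'" using submodD(2)[OF N' z] by blast
          then have "z' \<in> N'" using z'eq by simp
          moreover have "nat (a - v z') < n" using n gt lt by simp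
          ultimately have "z' \<in> N" using less by blast
          moreover have "z = z' + a' * w" using z'eq by simp
          ultimately show ?thesis using submodD(2)[OF N] submodD(3)[OF N a'(1) w(1)] by simp
        qed
      qed
    qed
  qed
  then show ?thesis by blast
qed

lemma chain_mono: assumes "\<forall>i<n. f i \<subset> f (Suc i)" "j \<le> k" "k \<le> n" shows "f j \<subseteq> f k"
  using assms(2,3)
proof (induction k)
  case 0 then show ?case by simp
next
  case (Suc k)
  then show ?case
  proof (cases "j = Suc k")
    case False
    then have "f j \<subseteq> f k" using Suc by simp
    moreover have "f k \<subset> f (Suc k)" using assms(1) Suc by simp
    ultimately show ?thesis by blast
  qed simp
qed

lemma chains_bound:
  assumes N: "submod R N" and M: "M \<subseteq> VR" and C: "Cset (int a) \<subseteq> N" and n: "n \<in> chains N M"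
  shows "n \<le> card (vals v M - vals v N)"
proof -
  obtain f where f0: "f 0 = N" and fn: "f n = M" and st: "\<forall>i<n. f i \<subset> f (Suc i)"
    and sm: "\<forall>i\<le>n. submod R (f i)" using n unfolding chains_def by blast
  have fin: "finite (vals v X - vals v N)" for X using fin_diff(2)[OF C] .
  have step: "card (vals v (f j) - vals v N) < card (vals v (f (Suc j)) - vals v N)" if j: "Suc j \<le> n" for j
  proof -
    have "f j \<subset> f (Suc j)" using st j by simp
    then have sub1: "f j \<subseteq> f (Suc j)" "f j \<noteq> f (Suc j)" by auto
    have "f (Suc j) \<subseteq> f n" using chain_mono[OF st, of "Suc j" n] j by simp
    then have VRj: "f (Suc j) \<subseteq> VR" using M fn by blast
    have Nj: "N \<subseteq> f j" using chain_mono[OF st, of 0 j] j f0 by simp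
    have smj: "submod R (f j)" "submod R (f (Suc j))" using sm j by simp_all
    have Cj: "Cset (int a) \<subseteq> f j" using C Nj by (rule subset_trans)
    have "\<not> vals v (f (Suc j)) \<subseteq> vals v (f j)"
    proof
      assume "vals v (f (Suc j)) \<subseteq> vals v (f j)"
      then have "f (Suc j) \<subseteq> f j" using approx[OF smj sub1(1) VRj Cj] by blast
      then show False using sub1 by blast
    qed
    then obtain g where g: "g \<in> vals v (f (Suc j))" "g \<notin> vals v (f j)" by blast
    have gN: "g \<notin> vals v N" using g vals_mono[OF Nj] by blast
    have "vals v (f j) - vals v N \<subset> vals v (f (Suc j)) - vals v N"
      using vals_mono[OF sub1(1)] g gN by blast
    then show ?thesis using psubset_card_mono[OF fin] by blast
  qed
  have "j \<le> n \<Longrightarrow> j \<le> card (vals v (f j) - vals v N)" for j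
  proof (induction j)
    case 0 then show ?case by simp
  next
    case (Suc j)
    then have "j \<le> card (vals v (f j) - vals v N)" by simp
    then show ?case using step[OF Suc.prems] by simp
  qed
  from this[of n] show ?thesis using fn by simp
qed

lemma chains_exist:
  assumes M: "submod R M" "M \<subseteq> VR"
  shows "\<And>N. submod R N \<Longrightarrow> N \<subseteq> M \<Longrightarrow> Cset (int a) \<subseteq> N \<Longrightarrow> card (vals v M - vals v N) = m
     \<Longrightarrow> m \<in> chains N M"
proof (induction m)
  case (0 N)
  then have "vals v M \<subseteq> vals v N" using fin_diff[OF 0(3)] by auto
  then have "M \<subseteq> N" using approx[of N M "int a"] 0 M by auto
  then have "N = M" using 0 by blast
  then show ?case unfolding chains_def using 0 by (auto intro!: exI[of _ "\<lambda>_. M"])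
next
  case (Suc m N)
  define D where "D = vals v M - vals v N"
  have finD: "finite D" using fin_diff[OF Suc(4)] D_def by simp
  have "D \<noteq> {}" using Suc(5) D_def by (metis card.empty nat.distinct(1))
  define d where "d = Max D"
  have dD: "d \<in> D" using finD \<open>D \<noteq> {}\<close> d_def by simp
  have dmax: "g \<in> D \<Longrightarrow> g \<le> d" for g using finD d_def by simp
  obtain z where z: "z \<in> M" "z \<noteq> 0" "nat (v z) = d" using dD D_def by (auto elim: valsE)
  have vz: "v z = int d" using z M(2) VR_iff by auto
  define N' where "N' = {y + w | y w. y \<in> N \<and> w \<in> M \<and> (w = 0 \<or> int d \<le> v w)}"
  have NM: "N \<subseteq> M" using Suc by simp
  have sN': "submod R N'"
    unfolding submod_def
  proof (intro conjI ballI)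
    show "0 \<in> N'" unfolding N'_def using submodD(1)[OF Suc(2)] submodD(1)[OF M(1)] by force
  next
    fix x y assume "x \<in> N'" "y \<in> N'"
    then obtain y1 w1 y2 w2 where h: "x = y1 + w1" "y1 \<in> N" "w1 \<in> M" "w1 = 0 \<or> int d \<le> v w1"
      "y = y2 + w2" "y2 \<in> N" "w2 \<in> M" "w2 = 0 \<or> int d \<le> v w2" unfolding N'_def by blast
    have "w1 + w2 = 0 \<or> int d \<le> v (w1 + w2)" using vadd_ge[of w1 w2] h by blast
    moreover have "x + y = (y1 + y2) + (w1 + w2)" using h by simp
    ultimately show "x + y \<in> N'" unfolding N'_def
      using submodD(2)[OF Suc(2) h(2,6)] submodD(2)[OF M(1) h(3,7)] by blast
  next
    fix r x assume r: "r \<in> R" and "x \<in> N'"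
    then obtain y w where h: "x = y + w" "y \<in> N" "w \<in> M" "w = 0 \<or> int d \<le> v w"
      unfolding N'_def by blast
    have "r * w = 0 \<or> int d \<le> v (r * w)"
    proof (cases "r = 0 \<or> w = 0")
      case False then show ?thesis using vmult[of r w] Rv[OF r] h(4) by auto
    qed auto
    moreover have "r * x = r * y + r * w" using h by (simp add: algebra_simps)
    ultimately show "r * x \<in> N'" unfolding N'_def
      using submodD(3)[OF Suc(2) r h(2)] submodD(3)[OF M(1) r h(3)] by blast
  qed
  have NN': "N \<subseteq> N'" unfolding N'_def
  proof
    fix y assume "y \<in> N" then show "y \<in> {y + w |y w. y \<in> N \<and> w \<in> M \<and> (w = 0 \<or> int d \<le> v w)}"
      using submodD(1)[OF M(1)] by force
  qed
  have N'M: "N' \<subseteq> M" unfolding N'_def using NM submodD(2)[OF M(1)] by blast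
  have zN': "z \<in> N'" unfolding N'_def using z vz submodD(1)[OF Suc(2)] by force
  have zN: "z \<notin> N" using z dD D_def valsI[of z N] by auto
  have CN': "Cset (int a) \<subseteq> N'" using Suc(4) NN' by blast
  have eq: "vals v M - vals v N' = D - {d}"
  proof
    show "vals v M - vals v N' \<subseteq> D - {d}"
      using vals_mono[OF NN'] valsI[OF zN' z(2)] z(3) D_def by blast
  next
    show "D - {d} \<subseteq> vals v M - vals v N'"
    proof
      fix g assume g: "g \<in> D - {d}"
      then have gd: "g < d" using dmax by force
      have "g \<notin> vals v N'"
      proof
        assume "g \<in> vals v N'"
        then obtain u where u: "u \<in> N'" "u \<noteq> 0" "nat (v u) = g" by (rule valsE)
        then obtain y w where h: "u = y + w" "y \<in> N" "w \<in> M" "w = 0 \<or> int d \<le> v w"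
          unfolding N'_def by blast
        show False
        proof (cases "y \<noteq> 0 \<and> (w = 0 \<or> v y < v w)")
          case True
          then have "v u = v y" using vadd_strict[of y w] h by auto
          then have "g \<in> vals v N" using valsI[of y N] True h u by auto
          then show False using g D_def by blast
        next
          case False
          then have "int d \<le> v u"
          proof (cases "y = 0")
            case True then show ?thesis using h u by auto
          next
            case False
            then have "w \<noteq> 0" "v w \<le> v y" using \<open>\<not> (y \<noteq> 0 \<and> (w = 0 \<or> v y < v w))\<close> by auto
            then show ?thesis using vadd_ge[of y w "int d"] h u by auto
          qed
          then show False using u gd by linarith
        qed
      qed
      then show "g \<in> vals v M - vals v N'" using g D_def by blast
    qed
  qed
  have "card (vals v M - vals v N') = m" using eq Suc(5) D_def dD finD by simp
  then have "m \<in> chains N' M" using Suc.IH[OF sN' N'M CN'] by blast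
  then obtain f where f: "f 0 = N'" "f m = M" "\<forall>i<m. f i \<subset> f (Suc i)" "\<forall>i\<le>m. submod R (f i)"
    unfolding chains_def by blast
  define g where "g i = (if i = 0 then N else f (i - 1))" for i
  have "g 0 = N" "g (Suc m) = M" using f g_def by auto
  moreover have "\<forall>i<Suc m. g i \<subset> g (Suc i)"
  proof (intro allI impI)
    fix i assume "i < Suc m"
    then show "g i \<subset> g (Suc i)"
      using f NN' zN' zN by (cases i) (auto simp: g_def)
  qed
  moreover have "\<forall>i\<le>Suc m. submod R (g i)"
    using f Suc(2) by (auto simp: g_def)
  ultimately show ?case unfolding chains_def by blast
qed

theorem ell_eq:
  assumes N: "submod R N" and M: "submod R M" "M \<subseteq> VR" and NM: "N \<subseteq> M" and C: "Cset (int a) \<subseteq> N"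
  shows "ell R N M = card (vals v M - vals v N)"
    and "card (vals v M - vals v N) \<in> chains N M"
    and "\<And>n. n \<in> chains N M \<Longrightarrow> n \<le> card (vals v M - vals v N)"
proof -
  show mem: "card (vals v M - vals v N) \<in> chains N M"
    using chains_exist[OF M N NM C] by blast
  show bd: "\<And>n. n \<in> chains N M \<Longrightarrow> n \<le> card (vals v M - vals v N)"
    using chains_bound[OF N M(2) C] by blast
  show "ell R N M = card (vals v M - vals v N)"
    unfolding ell_chains using cSup_eq_maximum[OF mem bd] by simp
qed

lemma chain_map:
  assumes N1: "submod R N1" and N2: "submod R N2" and M1s: "submod R M1"
    and h1: "\<forall>z\<in>N1. a * z \<in> N2" and h2: "\<forall>z\<in>M1. a * z \<in> N2 \<longrightarrow> z \<in> N1"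
    and n: "n \<in> chains N1 M1"
  shows "n \<in> chains N2 {y + a * z | y z. y \<in> N2 \<and> z \<in> M1}"
proof -
  obtain f where f0: "f 0 = N1" and fn: "f n = M1" and st: "\<forall>i<n. f i \<subset> f (Suc i)"
    and sm: "\<forall>i\<le>n. submod R (f i)" using n unfolding chains_def by blast
  define g where "g j = {y + a * z | y z. y \<in> N2 \<and> z \<in> f j}" for j
  have fM: "j \<le> n \<Longrightarrow> f j \<subseteq> M1" for j using chain_mono[OF st, of j n] fn by simp
  have Nf: "j \<le> n \<Longrightarrow> N1 \<subseteq> f j" for j using chain_mono[OF st, of 0 j] f0 by simp
  have "g 0 = N2"
  proof
    show "g 0 \<subseteq> N2" unfolding g_def f0 using h1 submodD(2)[OF N2] by blast
    show "N2 \<subseteq> g 0" unfolding g_def f0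
    proof
      fix y assume "y \<in> N2" then show "y \<in> {y + a * z |y z. y \<in> N2 \<and> z \<in> N1}"
        using submodD(1)[OF N1] by force
    qed
  qed
  moreover have "g n = {y + a * z | y z. y \<in> N2 \<and> z \<in> M1}" unfolding g_def fn by simp
  moreover have "\<forall>i<n. g i \<subset> g (Suc i)"
  proof (intro allI impI)
    fix i assume i: "i < n"
    have s: "f i \<subseteq> f (Suc i)" "f i \<noteq> f (Suc i)" using st i by auto
    then have "g i \<subseteq> g (Suc i)" unfolding g_def by blast
    moreover obtain z where z: "z \<in> f (Suc i)" "z \<notin> f i" using s by blast
    have "a * z \<in> g (Suc i)" unfolding g_def using z submodD(1)[OF N2] by force
    moreover have "a * z \<notin> g i"
    proof
      assume "a * z \<in> g i"
      then obtain y z' where yz: "a * z = y + a * z'" "y \<in> N2" "z' \<in> f i" unfolding g_def by blast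
      have "a * (z - z') \<in> N2" using yz by (simp add: algebra_simps)
      moreover have "z - z' \<in> f (Suc i)" using submod_diff[of "f (Suc i)" z z'] sm i z yz s by auto
      then have "z - z' \<in> M1" using fM[of "Suc i"] i by auto
      ultimately have "z - z' \<in> N1" using h2 by blast
      then have "z - z' \<in> f i" using Nf[of i] i by auto
      then have "(z - z') + z' \<in> f i" using submodD(2)[of "f i" "z - z'" z'] sm i yz by auto
      then show False using z by simp
    qed
    ultimately show "g i \<subset> g (Suc i)" by blast
  qed
  moreover have "\<forall>i\<le>n. submod R (g i)"
  proof (intro allI impI)
    fix i assume i: "i \<le> n"
    have si: "submod R (f i)" using sm i by simp
    show "submod R (g i)" unfolding submod_def
    proof (intro conjI ballI)
      show "0 \<in> g i" unfolding g_def using submodD(1)[OF N2] submodD(1)[OF si] by force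
    next
      fix x y assume "x \<in> g i" "y \<in> g i"
      then obtain y1 z1 y2 z2 where h: "x = y1 + a * z1" "y1 \<in> N2" "z1 \<in> f i"
        "y = y2 + a * z2" "y2 \<in> N2" "z2 \<in> f i" unfolding g_def by blast
      have "x + y = (y1 + y2) + a * (z1 + z2)" using h by (simp add: algebra_simps)
      then show "x + y \<in> g i" unfolding g_def
        using submodD(2)[OF N2 h(2,5)] submodD(2)[OF si h(3,6)] by blast
    next
      fix r x assume r: "r \<in> R" "x \<in> g i"
      then obtain y z where h: "x = y + a * z" "y \<in> N2" "z \<in> f i" unfolding g_def by blast
      have "r * x = r * y + a * (r * z)" using h by (simp add: algebra_simps)
      then show "r * x \<in> g i" unfolding g_def
        using submodD(3)[OF N2 r(1) h(2)] submodD(3)[OF si r(1) h(3)] by blast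
    qed
  qed
  ultimately show ?thesis unfolding chains_def by blast
qed

end

locale setting2 = setting +
  assumes qf: "quotient_field_of R"
    and fin: "finite_module R (val_ring v)"
    and loc: "local_ring R"
    and nonreg: "\<not> regular_dim_one R"
begin

lemma Rsum: "finite A \<Longrightarrow> (\<forall>x\<in>A. f x \<in> R) \<Longrightarrow> sum f A \<in> R"
  by (induction A rule: finite_induct) (auto intro: R0 Radd)

lemma Rprod: "finite A \<Longrightarrow> (\<forall>x\<in>A. f x \<in> R) \<Longrightarrow> prod f A \<in> R"
  by (induction A rule: finite_induct) (auto intro: R1 Rmult)

lemma submod_R: "submod R R"
  unfolding submod_def using R0 Radd Rmult by auto

lemma conductor_ex: "\<exists>a. Cset (int a) \<subseteq> R"
proof -
  obtain G where G: "finite G" "G \<subseteq> VR" "VR = lin_span R G"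
    using fin unfolding finite_module_def VR_def by blast
  have "\<forall>g. \<exists>b. b \<in> R \<and> b \<noteq> 0 \<and> g * b \<in> R"
  proof
    fix g
    obtain a b where "a \<in> R" "b \<in> R" "b \<noteq> 0" "g = a / b" using qf unfolding quotient_field_of_def by blast
    then show "\<exists>b. b \<in> R \<and> b \<noteq> 0 \<and> g * b \<in> R" by (intro exI[of _ b]) simp
  qed
  then obtain bd where bd: "\<And>g. bd g \<in> R" "\<And>g. bd g \<noteq> 0" "\<And>g. g * bd g \<in> R" by metis
  define d where "d = prod bd G"
  have dR: "d \<in> R" using Rprod[OF G(1)] bd unfolding d_def by blast
  have d0: "d \<noteq> 0" using bd G(1) unfolding d_def by simp
  have dg: "d * g \<in> R" if g: "g \<in> G" for g
  proof -
    have "d = bd g * prod bd (G - {g})" unfolding d_def using G(1) g by (simp add: prod.remove)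
    then have eq: "d * g = (g * bd g) * prod bd (G - {g})" by (simp add: algebra_simps)
    have P: "prod bd (G - {g}) \<in> R" using Rprod[of "G - {g}" bd] G(1) bd by simp
    show ?thesis unfolding eq by (rule Rmult[OF bd(3) P])
  qed
  have dV: "d * z \<in> R" if z: "z \<in> VR" for z
  proof -
    obtain f where f: "z = (\<Sum>g\<in>G. f g * g)" "\<forall>g\<in>G. f g \<in> R"
      using z G(3) unfolding lin_span_def by blast
    have "d * z = (\<Sum>g\<in>G. f g * (d * g))" unfolding f(1) by (simp add: sum_distrib_left algebra_simps)
    then show ?thesis using Rsum[OF G(1)] f(2) dg Rmult by simp
  qed
  have vd: "0 \<le> v d" using Rv[OF dR d0] .
  have "Cset (int (nat (v d))) \<subseteq> R"
  proof
    fix w assume "w \<in> Cset (int (nat (v d)))"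
    then have w: "w = 0 \<or> v d \<le> v w" unfolding Cset_def using vd by simp
    show "w \<in> R"
    proof (cases "w = 0")
      case True then show ?thesis using R0 by simp
    next
      case False
      then have "v (w / d) = v w - v d" using vdiv d0 by simp
      then have "w / d \<in> VR" using w False VR_iff by simp
      then have "d * (w / d) \<in> R" using dV by blast
      then show ?thesis using d0 by simp
    qed
  qed
  then show ?thesis by blast
qed

abbreviation V0 where "V0 \<equiv> vR R v"

lemma V0_iff: "g \<in> V0 \<longleftrightarrow> (\<exists>a\<in>R. a \<noteq> 0 \<and> v a = int g)"
proof
  assume "g \<in> V0"
  then obtain a where a: "a \<in> R" "a \<noteq> 0" "nat (v a) = g" unfolding vR_def by (auto elim: valsE)
  then have "v a = int g" using Rv[OF a(1,2)] by simp
  then show "\<exists>a\<in>R. a \<noteq> 0 \<and> v a = int g" using a by blast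
next
  assume "\<exists>a\<in>R. a \<noteq> 0 \<and> v a = int g"
  then obtain a where a: "a \<in> R" "a \<noteq> 0" "v a = int g" by blast
  have "nat (v a) \<in> vals v R" by (rule valsI[OF a(1,2)])
  then show "g \<in> V0" unfolding vR_def using a(3) by simp
qed

lemma V0_0: "0 \<in> V0"
proof -
  have "(1::'a) \<in> R \<and> (1::'a) \<noteq> 0 \<and> v 1 = int 0" using R1 v1 by simp
  then show ?thesis using V0_iff by blast
qed

lemma V0_add: assumes "g \<in> V0" "h \<in> V0" shows "g + h \<in> V0"
proof -
  obtain a where a: "a \<in> R" "a \<noteq> 0" "v a = int g" using assms(1) V0_iff by blast
  obtain b where b: "b \<in> R" "b \<noteq> 0" "v b = int h" using assms(2) V0_iff by blast
  have "a * b \<in> R" "a * b \<noteq> 0" "v (a * b) = int (g + h)" using Rmult[OF a(1) b(1)] vmult[OF a(2) b(2)] a b by auto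
  then show ?thesis using V0_iff by blast
qed

lemma Cset_V0: assumes "Cset (int a) \<subseteq> R" "a \<le> g" shows "g \<in> V0"
  using Cset_vals[OF assms] unfolding vR_def .

definition cc where "cc = cond_c R v"

lemma cc_ex: "\<exists>c. c \<in> V0 \<and> (\<forall>m\<ge>c. m \<in> V0)"
proof -
  obtain a where a: "Cset (int a) \<subseteq> R" using conductor_ex by blast
  have "a \<in> V0 \<and> (\<forall>m\<ge>a. m \<in> V0)" using Cset_V0[OF a] by blast
  then show ?thesis by blast
qed

lemma cc_prop: "cc \<in> V0 \<and> (\<forall>m\<ge>cc. m \<in> V0)"
  unfolding cc_def cond_c_def using cc_ex by (rule LeastI_ex)

lemma cc_in: "cc \<in> V0" and cc_ge: "\<And>m. cc \<le> m \<Longrightarrow> m \<in> V0"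
  using cc_prop by blast+

lemma cc_min: "c' \<in> V0 \<Longrightarrow> \<forall>m\<ge>c'. m \<in> V0 \<Longrightarrow> cc \<le> c'"
  unfolding cc_def cond_c_def by (rule Least_le) (rule conjI)

lemma conductor: "Cset (int cc) \<subseteq> R"
proof -
  obtain a where a: "Cset (int a) \<subseteq> R" using conductor_ex by blast
  define N' where "N' = {r + w | r w. r \<in> R \<and> w \<in> Cset (int cc)}"
  have sN': "submod R N'" unfolding submod_def
  proof (intro conjI ballI)
    have "(0::'a) = 0 + 0" by simp
    moreover have "(0::'a) \<in> Cset (int cc)" unfolding Cset_def by simp
    ultimately show "0 \<in> N'" unfolding N'_def using R0 by blast
  next
    fix x y assume "x \<in> N'" "y \<in> N'"
    then obtain r1 w1 r2 w2 where h: "x = r1 + w1" "r1 \<in> R" "w1 \<in> Cset (int cc)"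
      "y = r2 + w2" "r2 \<in> R" "w2 \<in> Cset (int cc)" unfolding N'_def by blast
    have "w1 + w2 \<in> Cset (int cc)" using h vadd_ge[of w1 w2] unfolding Cset_def by auto
    moreover have "x + y = (r1 + r2) + (w1 + w2)" using h by simp
    ultimately show "x + y \<in> N'" unfolding N'_def using Radd h by blast
  next
    fix s x assume s: "s \<in> R" and "x \<in> N'"
    then obtain r w where h: "x = r + w" "r \<in> R" "w \<in> Cset (int cc)" unfolding N'_def by blast
    have "s * w \<in> Cset (int cc)"
      using h(3) vmult[of s w] Rv[OF s] unfolding Cset_def by (cases "s = 0"; cases "w = 0") auto
    moreover have "s * x = s * r + s * w" using h by (simp add: algebra_simps)
    ultimately show "s * x \<in> N'" unfolding N'_def using Rmult[OF s h(2)] by blast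
  qed
  have RN': "R \<subseteq> N'"
  proof
    fix r assume "r \<in> R"
    moreover have "r = r + 0" by simp
    moreover have "(0::'a) \<in> Cset (int cc)" unfolding Cset_def by simp
    ultimately show "r \<in> N'" unfolding N'_def by blast
  qed
  have N'VR: "N' \<subseteq> VR"
  proof
    fix x assume "x \<in> N'"
    then obtain r w where h: "x = r + w" "r \<in> R" "w \<in> Cset (int cc)" unfolding N'_def by blast
    have r0: "r = 0 \<or> 0 \<le> v r" using Rv h(2) by blast
    have w0: "w = 0 \<or> 0 \<le> v w" using h(3) unfolding Cset_def by auto
    show "x \<in> VR"
    proof (cases "x = 0")
      case True then show ?thesis using VR_iff by blast
    next
      case False
      then have "0 \<le> v (r + w)" using vadd_ge[of r w 0] r0 w0 h(1) by blast
      then show ?thesis using VR_iff h(1) by blast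
    qed
  qed
  have "vals v N' \<subseteq> vals v R"
  proof
    fix g assume "g \<in> vals v N'"
    then obtain u where u: "u \<in> N'" "u \<noteq> 0" "nat (v u) = g" by (rule valsE)
    then obtain r w where h: "u = r + w" "r \<in> R" "w \<in> Cset (int cc)" unfolding N'_def by blast
    show "g \<in> vals v R"
    proof (cases "r \<noteq> 0 \<and> (w = 0 \<or> v r < v w)")
      case True
      then have "v u = v r" using vadd_strict[of r w] h by auto
      then show ?thesis using valsI[of r R] h True u by auto
    next
      case False
      have "int cc \<le> v u"
      proof (cases "r = 0")
        case True then show ?thesis using h u unfolding Cset_def by auto
      next
        case False
        then have "w \<noteq> 0" "v w \<le> v r" using \<open>\<not> (r \<noteq> 0 \<and> (w = 0 \<or> v r < v w))\<close> by auto
        then show ?thesis using vadd_ge[of r w "int cc"] h u unfolding Cset_def by auto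
      qed
      then have "cc \<le> g" using u by linarith
      then show ?thesis using cc_ge unfolding vR_def by blast
    qed
  qed
  then have "N' \<subseteq> R" using approx[OF submod_R sN' RN' N'VR a] by blast
  moreover have "Cset (int cc) \<subseteq> N'"
  proof
    fix w assume "w \<in> Cset (int cc)"
    moreover have "w = 0 + w" by simp
    ultimately show "w \<in> N'" unfolding N'_def using R0 by blast
  qed
  ultimately show ?thesis by blast
qed

lemma unit_v: "a \<in> R \<Longrightarrow> b \<in> R \<Longrightarrow> a * b = 1 \<Longrightarrow> v a = 0"
proof -
  assume h: "a \<in> R" "b \<in> R" "a * b = 1"
  then have "a \<noteq> 0" "b \<noteq> 0" by auto
  then have "v a + v b = 0" using vmult[of a b] h v1 by simp
  then show "v a = 0" using Rv[OF h(1) \<open>a\<noteq>0\<close>] Rv[OF h(2) \<open>b\<noteq>0\<close>] by simp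
qed

lemma mchar: "max_ideal R = {a \<in> R. a = 0 \<or> 0 < v a}"
proof
  show "{a \<in> R. a = 0 \<or> 0 < v a} \<subseteq> max_ideal R"
    unfolding max_ideal_def using unit_v by fastforce
next
  show "max_ideal R \<subseteq> {a \<in> R. a = 0 \<or> 0 < v a}"
  proof
    fix a assume am: "a \<in> max_ideal R"
    then have aR: "a \<in> R" and nu: "\<not> (\<exists>b\<in>R. a * b = 1)" unfolding max_ideal_def by auto
    have idl: "is_ideal R (max_ideal R)" using loc unfolding local_ring_def .
    show "a \<in> {a \<in> R. a = 0 \<or> 0 < v a}"
    proof (rule ccontr)
      assume "a \<notin> {a \<in> R. a = 0 \<or> 0 < v a}"
      then have a0: "a \<noteq> 0" and va: "v a = 0" using aR Rv by force+
      have vi: "v (inverse a) = 0" using vdiv[of 1 a] a0 va v1 by (simp add: divide_inverse)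
      then have "inverse a \<in> VR" using VR_iff by simp
      then obtain a' where a': "a' \<in> R" "inverse a - a' = 0 \<or> 1 \<le> v (inverse a - a')"
        using resrat' by blast
      show False
      proof (cases "inverse a - a' = 0")
        case True then have "a * a' = 1" using a0 by (simp add: field_simps)
        then show False using nu a' by blast
      next
        case False
        define u where "u = 1 - a * a'"
        have ue: "u = a * (inverse a - a')" unfolding u_def using a0 by (simp add: algebra_simps)
        then have u0: "u \<noteq> 0" using a0 False by simp
        have vu: "1 \<le> v u" using ue vmult[of a "inverse a - a'"] a0 False va a' by simp
        have uR: "u \<in> R" unfolding u_def using Rdiff[OF R1 Rmult[OF aR a'(1)]] .
        have "a' * a \<in> max_ideal R" using idl am a'(1) unfolding is_ideal_def by blast
        have "u \<notin> max_ideal R"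
        proof
          assume "u \<in> max_ideal R"
          then have "u + a' * a \<in> max_ideal R" using idl \<open>a' * a \<in> max_ideal R\<close> unfolding is_ideal_def by blast
          then have "1 \<in> max_ideal R" unfolding u_def by (simp add: algebra_simps)
          then show False unfolding max_ideal_def using R1 by auto
        qed
        then obtain b where "b \<in> R" "u * b = 1" using uR unfolding max_ideal_def by blast
        then have "v u = 0" using unit_v uR by blast
        then show False using vu by simp
      qed
    qed
  qed
qed

lemma cc_pos: "0 < cc"
proof (rule ccontr)
  assume "\<not> 0 < cc"
  then have c0: "cc = 0" by simp
  have VRR: "VR \<subseteq> R" using conductor c0 unfolding Cset_def using VR_iff by auto
  have "tt \<in> VR" using tt VR_iff by simp
  then have ttR: "tt \<in> R" using VRR by blast
  have "max_ideal R = {tt * a | a. a \<in> R}"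
  proof
    show "max_ideal R \<subseteq> {tt * a | a. a \<in> R}"
    proof
      fix x assume "x \<in> max_ideal R"
      then have x: "x \<in> R" "x = 0 \<or> 0 < v x" using mchar by auto
      have "x / tt \<in> VR"
        using x vdiv[of x tt] tt VR_iff by (cases "x = 0") auto
      then have "x / tt \<in> R" using VRR by blast
      moreover have "x = tt * (x / tt)" using tt by simp
      ultimately show "x \<in> {tt * a | a. a \<in> R}" by blast
    qed
  next
    show "{tt * a | a. a \<in> R} \<subseteq> max_ideal R"
    proof
      fix x assume "x \<in> {tt * a | a. a \<in> R}"
      then obtain a where a: "a \<in> R" "x = tt * a" by blast
      have "x \<in> R" using Rmult[OF ttR a(1)] a by simp
      moreover have "x = 0 \<or> 0 < v x" using a vmult[of tt a] tt Rv[OF a(1)] by (cases "a = 0") auto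
      ultimately show "x \<in> max_ideal R" using mchar by blast
    qed
  qed
  then have "regular_dim_one R" unfolding regular_dim_one_def using ttR by blast
  then show False using nonreg by simp
qed

lemma ccm1: "cc - 1 \<notin> V0"
proof
  assume h: "cc - 1 \<in> V0"
  have "\<forall>m\<ge>cc - 1. m \<in> V0"
  proof (intro allI impI)
    fix m assume "cc - 1 \<le> m"
    then have "m = cc - 1 \<or> cc \<le> m" by linarith
    then show "m \<in> V0" using h cc_ge by blast
  qed
  then have "cc \<le> cc - 1" using cc_min h by blast
  then show False using cc_pos by simp
qed

lemma colon_nonneg:
  assumes z0: "z \<noteq> 0" and zc: "\<forall>w\<in>Cset (int cc). z * w \<in> R"
  shows "0 \<le> v z"
proof -
  have ttc: "tt ^ cc \<in> Cset (int cc)" unfolding Cset_def using ttpow by simp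
  define w0 where "w0 = z * tt ^ cc"
  have w0R: "w0 \<in> R" using zc ttc unfolding w0_def by blast
  have w00: "w0 \<noteq> 0" unfolding w0_def using z0 ttpow by simp
  have vw0: "v w0 = v z + int cc" unfolding w0_def using vmult[of z "tt^cc"] z0 ttpow by simp
  have pos: "0 \<le> v w0" using Rv[OF w0R w00] .
  have all: "\<forall>m\<ge>nat (v w0). m \<in> V0"
  proof (intro allI impI)
    fix m assume m: "nat (v w0) \<le> m"
    define j where "j = nat (int m - v z)"
    have j: "int j = int m - v z" "cc \<le> j" using m pos vw0 unfolding j_def by auto
    have "tt ^ j \<in> Cset (int cc)" unfolding Cset_def using ttpow j by simp
    then have "z * tt ^ j \<in> R" using zc by blast
    moreover have "z * tt ^ j \<noteq> 0" using z0 ttpow by simp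
    moreover have "v (z * tt ^ j) = int m" using vmult[of z "tt^j"] z0 ttpow j by simp
    ultimately show "m \<in> V0" using V0_iff by blast
  qed
  then have "cc \<le> nat (v w0)" using cc_min by blast
  then show ?thesis using vw0 pos by linarith
qed

lemma colon_VR: "Cset (int cc) \<subseteq> X \<Longrightarrow> colon R X \<subseteq> VR"
  unfolding colon_def using colon_nonneg VR_iff by blast

lemma colon_VR_eq: "colon R VR = Cset (int cc)"
proof
  show "colon R VR \<subseteq> Cset (int cc)"
  proof
    fix z assume z: "z \<in> colon R VR"
    show "z \<in> Cset (int cc)"
    proof (cases "z = 0")
      case True then show ?thesis unfolding Cset_def by simp
    next
      case False
      have "(1::'a) \<in> VR" using VR_iff v1 by simp
      then have "z * 1 \<in> R" using z unfolding colon_def by blast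
      then have zR: "z \<in> R" by simp
      then have vz: "0 \<le> v z" using Rv False by blast
      have all: "\<forall>m\<ge>nat (v z). m \<in> V0"
      proof (intro allI impI)
        fix m assume m: "nat (v z) \<le> m"
        define j where "j = m - nat (v z)"
        have "tt ^ j \<in> VR" using ttpow VR_iff by simp
        then have "z * tt ^ j \<in> R" using z unfolding colon_def by blast
        moreover have "z * tt ^ j \<noteq> 0" using False ttpow by simp
        moreover have "v (z * tt ^ j) = v z + int j" using vmult[OF False ttpow(1)] ttpow(2) by simp
        then have "v (z * tt ^ j) = int m" using vz m unfolding j_def by linarith
        ultimately show "m \<in> V0" using V0_iff by blast
      qed
      moreover have "nat (v z) \<in> V0" using all by simp
      ultimately have "cc \<le> nat (v z)" using cc_min by blast
      then have "int cc \<le> v z" using vz by linarith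
      then show ?thesis unfolding Cset_def by simp
    qed
  qed
next
  show "Cset (int cc) \<subseteq> colon R VR"
  proof
    fix z assume z: "z \<in> Cset (int cc)"
    show "z \<in> colon R VR" unfolding colon_def
    proof (intro CollectI ballI)
      fix y assume y: "y \<in> VR"
      have "z * y \<in> Cset (int cc)"
      proof (cases "z = 0 \<or> y = 0")
        case True then show ?thesis unfolding Cset_def by auto
      next
        case False
        then have "v (z * y) = v z + v y" using vmult by blast
        moreover have "int cc \<le> v z" using z False unfolding Cset_def by auto
        moreover have "0 \<le> v y" using y False VR_iff by blast
        ultimately show ?thesis unfolding Cset_def by simp
      qed
      then show "z * y \<in> R" using conductor by blast
    qed
  qed
qed

definition ee where "ee = mult_e R v"

lemma ee_prop: "ee \<in> V0" "0 < ee" "\<And>y. y \<in> V0 \<Longrightarrow> 0 < y \<Longrightarrow> ee \<le> y"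
proof -
  have ex: "cc \<in> V0 \<and> 0 < cc" using cc_in cc_pos by simp
  show "ee \<in> V0" "0 < ee" using LeastI[of "\<lambda>y. y \<in> V0 \<and> 0 < y", OF ex] unfolding ee_def mult_e_def by auto
  show "\<And>y. y \<in> V0 \<Longrightarrow> 0 < y \<Longrightarrow> ee \<le> y" unfolding ee_def mult_e_def by (rule Least_le) simp
qed

lemma ee_le_cc: "ee \<le> cc" using ee_prop(3)[OF cc_in cc_pos] .

lemma m_val: "a \<in> max_ideal R \<Longrightarrow> a \<noteq> 0 \<Longrightarrow> int ee \<le> v a"
proof -
  assume "a \<in> max_ideal R" "a \<noteq> 0"
  then have "a \<in> R" "0 < v a" using mchar by auto
  then have "nat (v a) \<in> V0" "0 < nat (v a)" using V0_iff \<open>a \<noteq> 0\<close> by auto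
  then show "int ee \<le> v a" using ee_prop(3) by fastforce
qed

lemma Cset_m: "Cset (int cc) \<subseteq> max_ideal R"
  using conductor cc_pos mchar unfolding Cset_def by force

end

context setting2 begin

lemma submod_colon: "submod R (colon R X)"
proof -
  have "0 \<in> colon R X" unfolding colon_def using R0 by simp
  moreover have "\<forall>a\<in>colon R X. \<forall>b\<in>colon R X. a + b \<in> colon R X"
    unfolding colon_def using Radd by (simp add: distrib_right)
  moreover have "\<forall>r\<in>R. \<forall>a\<in>colon R X. r * a \<in> colon R X"
    unfolding colon_def using Rmult by (simp add: mult.assoc)
  ultimately show ?thesis unfolding submod_def by blast
qed

lemma R_colon: "X \<subseteq> R \<Longrightarrow> R \<subseteq> colon R X"
  unfolding colon_def using Rmult by blast

lemma colon_anti: "X \<subseteq> Y \<Longrightarrow> colon R Y \<subseteq> colon R X"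
  unfolding colon_def by blast

lemma submod_VR: "submod R VR"
  unfolding submod_def
proof (intro conjI ballI)
  show "0 \<in> VR" using VR_iff by simp
next
  fix a b assume a: "a \<in> VR" and b: "b \<in> VR"
  show "a + b \<in> VR"
  proof (cases "a + b = 0")
    case True then show ?thesis using VR_iff by simp
  next
    case False
    have "0 \<le> v (a + b)" using vadd_ge[OF False] a b VR_iff by blast
    then show ?thesis using VR_iff by blast
  qed
next
  fix r a assume r: "r \<in> R" and a: "a \<in> VR"
  show "r * a \<in> VR"
  proof (cases "r = 0 \<or> a = 0")
    case True then show ?thesis using VR_iff by auto
  next
    case False
    then have "v (r * a) = v r + v a" using vmult by blast
    moreover have "0 \<le> v r" using Rv r False by blast
    moreover have "0 \<le> v a" using a False VR_iff by blast
    ultimately show ?thesis using VR_iff by simp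
  qed
qed

lemma Cset_R_sub: "Cset (int cc) \<subseteq> R" by (rule conductor)

lemma vals_VR: "vals v VR = UNIV"
proof -
  have "n \<in> vals v VR" for n
  proof -
    have "tt ^ n \<in> VR" using ttpow VR_iff by simp
    then show ?thesis using valsI[of "tt^n" VR] ttpow by simp
  qed
  then show ?thesis by blast
qed

definition N0 where "N0 = card (V0 \<inter> {..<cc})"

lemma delta_eq: "delta R v = cc - N0" and N0_le: "N0 \<le> cc"
proof -
  have "delta R v = card (vals v VR - vals v R)"
    unfolding delta_def VR_def[symmetric]
    using ell_eq(1)[OF submod_R submod_VR _ R_VR Cset_R_sub] by blast
  also have "vals v VR - vals v R = {..<cc} - V0"
  proof -
    have "UNIV - V0 = {..<cc} - V0" using cc_ge by (auto simp: not_less[symmetric])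
    then show ?thesis using vals_VR unfolding vR_def by simp
  qed
  finally have d: "delta R v = card ({..<cc} - V0)" .
  have "card ({..<cc} - V0) + card (V0 \<inter> {..<cc}) = cc"
  proof -
    have "card {..<cc} = card ({..<cc} \<inter> V0) + card ({..<cc} - V0)"
      by (rule card_Int_Diff) simp
    moreover have "{..<cc} \<inter> V0 = V0 \<inter> {..<cc}" by blast
    ultimately show ?thesis by simp
  qed
  then show "delta R v = cc - N0" "N0 \<le> cc" using d unfolding N0_def by auto
qed

lemma nnum_eq: "nnum R v = int N0"
  unfolding nnum_def using delta_eq N0_le cc_def by simp

definition Ap where "Ap = {a \<in> V0. \<not> (ee \<le> a \<and> a - ee \<in> V0)}"

end

locale setting3 = setting2 +
  fixes x
  assumes xm: "x \<in> max_ideal R" and xnz: "x \<noteq> 0" and xv0: "v x = int (mult_e R v)"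
begin

lemma xv: "v x = int ee" using xv0 ee_def by simp


lemma xR: "x \<in> R" using xm mchar by blast

lemma CxR_eq: "CxR R v x = {a + x * b | a b. a \<in> Cset (int cc) \<and> b \<in> R}"
  unfolding CxR_def VR_def[symmetric] colon_VR_eq ..

lemma CxR_sub: "submod R (CxR R v x)" "CxR R v x \<subseteq> R" "Cset (int cc) \<subseteq> CxR R v x"
proof -
  show "submod R (CxR R v x)" unfolding CxR_eq submod_def
  proof (intro conjI ballI)
    have "(0::'a) = 0 + x * 0" by simp
    moreover have "(0::'a) \<in> Cset (int cc)" unfolding Cset_def by simp
    ultimately show "0 \<in> {a + x * b |a b. a \<in> Cset (int cc) \<and> b \<in> R}" using R0 by blast
  next
    fix p q assume "p \<in> {a + x * b |a b. a \<in> Cset (int cc) \<and> b \<in> R}" "q \<in> {a + x * b |a b. a \<in> Cset (int cc) \<and> b \<in> R}"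
    then obtain a1 b1 a2 b2 where h: "p = a1 + x * b1" "a1 \<in> Cset (int cc)" "b1 \<in> R"
      "q = a2 + x * b2" "a2 \<in> Cset (int cc)" "b2 \<in> R" by blast
    have "a1 + a2 \<in> Cset (int cc)"
    proof (cases "a1 + a2 = 0")
      case False then show ?thesis using vadd_ge[OF False, of "int cc"] h unfolding Cset_def by blast
    qed (simp add: Cset_def)
    moreover have "p + q = (a1 + a2) + x * (b1 + b2)" using h by (simp add: algebra_simps)
    ultimately show "p + q \<in> {a + x * b |a b. a \<in> Cset (int cc) \<and> b \<in> R}" using Radd[OF h(3) h(6)] by blast
  next
    fix r p assume r: "r \<in> R" and "p \<in> {a + x * b |a b. a \<in> Cset (int cc) \<and> b \<in> R}"
    then obtain a b where h: "p = a + x * b" "a \<in> Cset (int cc)" "b \<in> R" by blast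
    have "r * a \<in> Cset (int cc)"
    proof (cases "r = 0 \<or> a = 0")
      case True then show ?thesis unfolding Cset_def by auto
    next
      case False
      then have "v (r * a) = v r + v a" using vmult by blast
      moreover have "0 \<le> v r" using Rv r False by blast
      moreover have "int cc \<le> v a" using h False unfolding Cset_def by auto
      ultimately show ?thesis unfolding Cset_def by simp
    qed
    moreover have "r * p = r * a + x * (r * b)" using h by (simp add: algebra_simps)
    ultimately show "r * p \<in> {a + x * b |a b. a \<in> Cset (int cc) \<and> b \<in> R}" using Rmult[OF r h(3)] by blast
  qed
  show "CxR R v x \<subseteq> R" unfolding CxR_eq using Cset_R_sub Radd Rmult[OF xR] by blast
  show "Cset (int cc) \<subseteq> CxR R v x" unfolding CxR_eq
  proof
    fix a assume "a \<in> Cset (int cc)"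
    moreover have "a = a + x * 0" by simp
    ultimately show "a \<in> {a + x * b |a b. a \<in> Cset (int cc) \<and> b \<in> R}" using R0 by blast
  qed
qed

lemma vals_CxR: "y \<in> vals v (CxR R v x) \<longleftrightarrow> (cc \<le> y \<or> (ee \<le> y \<and> y - ee \<in> V0))"
proof
  assume "y \<in> vals v (CxR R v x)"
  then obtain u where u: "u \<in> CxR R v x" "u \<noteq> 0" "nat (v u) = y" by (rule valsE)
  then obtain a b where h: "u = a + x * b" "a \<in> Cset (int cc)" "b \<in> R" unfolding CxR_eq by blast
  show "cc \<le> y \<or> (ee \<le> y \<and> y - ee \<in> V0)"
  proof (cases "int cc \<le> v u")
    case True then show ?thesis using u by linarith
  next
    case False
    have b0: "b \<noteq> 0" using False h u unfolding Cset_def by auto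
    have xb: "x * b \<noteq> 0" "v (x * b) = int ee + v b" using xnz b0 vmult xv by auto
    have vb: "0 \<le> v b" using Rv h(3) b0 by blast
    have "v u = v (x * b)"
    proof (cases "a = 0 \<or> v (x * b) < v a")
      case True
      then show ?thesis using vadd_strict[OF xb(1), of a] h(1) by (simp add: add.commute)
    next
      case F2: False
      then have a0: "a \<noteq> 0" and le: "v a \<le> v (x * b)" by auto
      have "int cc \<le> v a" using h(2) a0 unfolding Cset_def by auto
      then have "int cc \<le> v u" using vadd_ge[of a "x * b" "int cc"] h(1) u(2) le by auto
      then show ?thesis using False by simp
    qed
    then have "y = ee + nat (v b)" using u xb vb by linarith
    moreover have "nat (v b) \<in> V0" using h(3) b0 unfolding vR_def by (rule valsI)
    ultimately show ?thesis by simp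
  qed
next
  assume "cc \<le> y \<or> (ee \<le> y \<and> y - ee \<in> V0)"
  then show "y \<in> vals v (CxR R v x)"
  proof
    assume "cc \<le> y"
    then have "y \<in> vals v (Cset (int cc))" using Cset_vals[of cc "Cset (int cc)" y] by simp
    then show ?thesis using vals_mono[OF CxR_sub(3)] by blast
  next
    assume h: "ee \<le> y \<and> y - ee \<in> V0"
    then obtain b where b: "b \<in> R" "b \<noteq> 0" "v b = int (y - ee)" using V0_iff by blast
    have "x * b = 0 + x * b" by simp
    moreover have "(0::'a) \<in> Cset (int cc)" unfolding Cset_def by simp
    ultimately have "x * b \<in> CxR R v x" unfolding CxR_eq using b(1) by blast
    moreover have "x * b \<noteq> 0" using xnz b by simp
    moreover have "nat (v (x * b)) = y" using vmult[OF xnz b(2)] xv b(3) h by simp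
    ultimately show ?thesis using valsI by metis
  qed
qed

lemma Ap_lt: "V0 - vals v (CxR R v x) = Ap \<inter> {..<cc}"
proof
  show "V0 - vals v (CxR R v x) \<subseteq> Ap \<inter> {..<cc}"
  proof
    fix y assume y: "y \<in> V0 - vals v (CxR R v x)"
    then have "\<not> (cc \<le> y \<or> (ee \<le> y \<and> y - ee \<in> V0))" using vals_CxR by blast
    then show "y \<in> Ap \<inter> {..<cc}" using y unfolding Ap_def by simp
  qed
next
  show "Ap \<inter> {..<cc} \<subseteq> V0 - vals v (CxR R v x)"
  proof
    fix y assume y: "y \<in> Ap \<inter> {..<cc}"
    then have "\<not> (cc \<le> y \<or> (ee \<le> y \<and> y - ee \<in> V0))" unfolding Ap_def by simp
    then show "y \<in> V0 - vals v (CxR R v x)" using y vals_CxR unfolding Ap_def by blast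
  qed
qed

lemma knum_eq: "knum R v x = card (Ap \<inter> {..<cc})"
proof -
  have "knum R v x = card (vals v R - vals v (CxR R v x))"
    unfolding knum_def by (rule ell_eq(1)[OF CxR_sub(1) submod_R R_VR CxR_sub(2,3)])
  then show ?thesis using Ap_lt unfolding vR_def by simp
qed

lemma Ap0: "0 \<in> Ap"
proof -
  have "\<not> ee \<le> 0" using ee_prop(2) by simp
  then show ?thesis unfolding Ap_def using V0_0 by blast
qed

lemma Yset_eq: "Yset R v x = Ap \<inter> {..<cc} - {0}"
proof -
  have "Yset R v x = (V0 - vals v (CxR R v x)) - {0}" unfolding Yset_def by auto
  then show ?thesis using Ap_lt by simp
qed

end

lemma divbounds: "(e::nat) > 0 \<Longrightarrow> n div e * e \<le> n \<and> n < n div e * e + e"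
proof -
  assume e: "e > 0"
  have "n = n div e * e + n mod e" by simp
  moreover have "n mod e < e" using e by simp
  ultimately show ?thesis by linarith
qed

lemma int_unique:
  fixes e A p q :: int
  assumes e: "e > 0" and p: "A - e \<le> p * e" "p * e < A" and q: "A - e \<le> q * e" "q * e < A"
  shows "p = q"
proof -
  have "\<not> p < q" if "A - e \<le> p * e" "q * e < A" for p q :: int
  proof
    assume "p < q"
    then have "(p + 1) * e \<le> q * e" using e by (intro mult_right_mono) auto
    then show False using that by (simp add: algebra_simps)
  qed
  then show ?thesis using p q by (meson not_less_iff_gr_or_eq)
qed

context setting2 begin

definition topq where "topq a = (cc - 1 - a) div ee"

lemma topq_bounds: assumes "a < cc" shows "a + topq a * ee < cc" "cc \<le> a + topq a * ee + ee"
proof -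
  have "(cc - 1 - a) div ee * ee \<le> cc - 1 - a \<and> cc - 1 - a < (cc - 1 - a) div ee * ee + ee"
    using divbounds ee_prop(2) by blast
  then show "a + topq a * ee < cc" "cc \<le> a + topq a * ee + ee" using assms unfolding topq_def by linarith+
qed

lemma multV0: "j * ee \<in> V0"
proof (induction j)
  case 0 then show ?case using V0_0 by simp
next
  case (Suc j)
  then have "j * ee + ee \<in> V0" using V0_add ee_prop(1) by blast
  then show ?case by (simp add: add.commute)
qed

lemma addmult: "a \<in> V0 \<Longrightarrow> a + j * ee \<in> V0"
  using V0_add multV0 by blast

lemma Ap_chain: assumes a: "a \<in> Ap" and w: "a \<le> w" "w mod ee = a mod ee" shows "w \<in> V0"
proof -
  have "ee dvd w - a" using mod_eq_dvd_iff_nat[OF w(1)] w(2) by simp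
  then obtain j where j: "w - a = ee * j" by blast
  then have "w = a + j * ee" using w(1) by (simp add: mult.commute)
  then show ?thesis using addmult a unfolding Ap_def by simp
qed

lemma Ap_res_lt: assumes a: "a \<in> Ap" and a': "a' \<in> Ap" and lt: "a < a'" and m: "a' mod ee = a mod ee"
  shows False
proof -
  have "ee dvd a' - a" using mod_eq_dvd_iff_nat[of a a' ee] lt m by simp
  then obtain j where j: "a' - a = ee * j" by blast
  then have j1: "1 \<le> j" using lt by (cases j) auto
  have eq: "a' - ee = a + (j - 1) * ee" using j j1 lt
    by (simp add: algebra_simps mult.commute[of ee] diff_mult_distrib)
  have "ee \<le> a'"
  proof -
    have "ee \<le> ee * j" using j1 by simp
    then show ?thesis using j lt by linarith
  qed
  moreover have "a' - ee \<in> V0" unfolding eq using addmult a unfolding Ap_def by blast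
  ultimately show False using a' unfolding Ap_def by blast
qed

lemma Ap_res: "a \<in> Ap \<Longrightarrow> a' \<in> Ap \<Longrightarrow> a mod ee = a' mod ee \<Longrightarrow> a = a'"
  using Ap_res_lt by (metis linorder_neqE_nat)

lemma Ap_ex: assumes w: "w \<in> V0" shows "\<exists>a\<in>Ap. a \<le> w \<and> w mod ee = a mod ee"
proof -
  define a where "a = (LEAST u. u \<in> V0 \<and> u mod ee = w mod ee)"
  have a1: "a \<in> V0 \<and> a mod ee = w mod ee" unfolding a_def by (rule LeastI[of _ w]) (simp add: w)
  have a2: "a \<le> w" unfolding a_def by (rule Least_le) (simp add: w)
  have "a \<in> Ap"
  proof (unfold Ap_def, intro CollectI conjI notI)
    show "a \<in> V0" using a1 by simp
  next
    assume h: "ee \<le> a \<and> a - ee \<in> V0"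
    then have "(a - ee) mod ee = w mod ee" using a1 le_mod_geq[of ee a] by simp
    then have "(LEAST u. u \<in> V0 \<and> u mod ee = w mod ee) \<le> a - ee" using h by (intro Least_le) simp
    then have "a \<le> a - ee" unfolding a_def .
    then show False using h ee_prop(2) by linarith
  qed
  then show ?thesis using a1 a2 by auto
qed

definition FF where "FF a lo = {w. lo \<le> w \<and> w < cc \<and> a \<le> w \<and> w mod ee = a mod ee}"

lemma V0_part: "V0 \<inter> {lo..<cc} = (\<Union>a\<in>Ap \<inter> {..<cc}. FF a lo)"
proof
  show "V0 \<inter> {lo..<cc} \<subseteq> (\<Union>a\<in>Ap \<inter> {..<cc}. FF a lo)"
  proof
    fix w assume w: "w \<in> V0 \<inter> {lo..<cc}"
    then obtain a where a: "a \<in> Ap" "a \<le> w" "w mod ee = a mod ee" using Ap_ex by blast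
    then have "a < cc" using w by simp
    then show "w \<in> (\<Union>a\<in>Ap \<inter> {..<cc}. FF a lo)" using a w unfolding FF_def by auto
  qed
next
  show "(\<Union>a\<in>Ap \<inter> {..<cc}. FF a lo) \<subseteq> V0 \<inter> {lo..<cc}"
    unfolding FF_def using Ap_chain by auto
qed

lemma card_part: "card (V0 \<inter> {lo..<cc}) = (\<Sum>a\<in>Ap \<inter> {..<cc}. card (FF a lo))"
proof -
  have "card (\<Union>a\<in>Ap \<inter> {..<cc}. FF a lo) = (\<Sum>a\<in>Ap \<inter> {..<cc}. card (FF a lo))"
  proof (rule card_UN_disjoint)
    show "finite (Ap \<inter> {..<cc})" by simp
    show "\<forall>a\<in>Ap \<inter> {..<cc}. finite (FF a lo)"
      unfolding FF_def by (auto intro: finite_subset[of _ "{..<cc}"])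
    show "\<forall>a\<in>Ap \<inter> {..<cc}. \<forall>b\<in>Ap \<inter> {..<cc}. a \<noteq> b \<longrightarrow> FF a lo \<inter> FF b lo = {}"
      unfolding FF_def using Ap_res by fastforce
  qed
  then show ?thesis using V0_part by simp
qed

lemma FF0: assumes "a < cc" shows "FF a 0 = (\<lambda>j. a + j * ee) ` {..topq a}"
proof
  show "FF a 0 \<subseteq> (\<lambda>j. a + j * ee) ` {..topq a}"
  proof
    fix w assume w: "w \<in> FF a 0"
    then have w1: "a \<le> w" "w < cc" "w mod ee = a mod ee" unfolding FF_def by auto
    have "ee dvd w - a" using mod_eq_dvd_iff_nat[OF w1(1)] w1(3) by simp
    then obtain j where j: "w - a = ee * j" by blast
    have "j * ee \<le> cc - 1 - a" using j w1 by (simp add: mult.commute)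
    then have "j * ee div ee \<le> (cc - 1 - a) div ee" by (rule div_le_mono)
    then have "j \<le> topq a" unfolding topq_def using ee_prop(2) by simp
    moreover have "w = a + j * ee" using j w1 by (simp add: mult.commute)
    ultimately show "w \<in> (\<lambda>j. a + j * ee) ` {..topq a}" by blast
  qed
next
  show "(\<lambda>j. a + j * ee) ` {..topq a} \<subseteq> FF a 0"
  proof
    fix w assume "w \<in> (\<lambda>j. a + j * ee) ` {..topq a}"
    then obtain j where j: "j \<le> topq a" "w = a + j * ee" by blast
    have "j * ee \<le> topq a * ee" using j(1) by simp
    then have "w < cc" using topq_bounds[OF assms] j by linarith
    then show "w \<in> FF a 0" unfolding FF_def using j by simp
  qed
qed

lemma card_FF0: assumes "a < cc" shows "card (FF a 0) = topq a + 1"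
proof -
  have "inj_on (\<lambda>j. a + j * ee) {..topq a}" using ee_prop(2) by (intro inj_onI) simp
  then show ?thesis using FF0[OF assms] card_image by fastforce
qed

lemma FFtop: assumes a: "a < cc" shows "FF a (cc - ee) = {a + topq a * ee}"
proof
  show "FF a (cc - ee) \<subseteq> {a + topq a * ee}"
  proof
    fix w assume w: "w \<in> FF a (cc - ee)"
    then have "w \<in> FF a 0" unfolding FF_def by auto
    then obtain j where j: "j \<le> topq a" "w = a + j * ee" using FF0[OF a] by blast
    have "j = topq a"
    proof (rule ccontr)
      assume "j \<noteq> topq a"
      then have "Suc j \<le> topq a" using j by simp
      then have "Suc j * ee \<le> topq a * ee" by (rule mult_le_mono1)
      then have "w + ee < cc" using topq_bounds[OF a] j by simp
      moreover have "cc - ee \<le> w" using w unfolding FF_def by simp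
      ultimately show False using ee_le_cc by linarith
    qed
    then show "w \<in> {a + topq a * ee}" using j by simp
  qed
next
  show "{a + topq a * ee} \<subseteq> FF a (cc - ee)"
    unfolding FF_def using topq_bounds[OF a] by simp
qed

lemma N0_sum: "N0 = (\<Sum>a\<in>Ap \<inter> {..<cc}. topq a + 1)"
proof -
  have "V0 \<inter> {..<cc} = V0 \<inter> {0..<cc}" by auto
  then have "N0 = (\<Sum>a\<in>Ap \<inter> {..<cc}. card (FF a 0))" unfolding N0_def using card_part by simp
  also have "\<dots> = (\<Sum>a\<in>Ap \<inter> {..<cc}. topq a + 1)" using card_FF0 by (intro sum.cong) auto
  finally show ?thesis .
qed

lemma k_top: "card (V0 \<inter> {cc - ee..<cc}) = card (Ap \<inter> {..<cc})"
proof -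
  have "card (V0 \<inter> {cc - ee..<cc}) = (\<Sum>a\<in>Ap \<inter> {..<cc}. card (FF a (cc - ee)))" by (rule card_part)
  also have "\<dots> = (\<Sum>a\<in>Ap \<inter> {..<cc}. 1)" using FFtop by (intro sum.cong) auto
  finally show ?thesis by simp
qed

lemma N0_split: "N0 = card (V0 \<inter> {..<cc - ee}) + card (V0 \<inter> {cc - ee..<cc})"
proof -
  have "V0 \<inter> {..<cc} = (V0 \<inter> {..<cc - ee}) \<union> (V0 \<inter> {cc - ee..<cc})" using ee_le_cc by auto
  moreover have "(V0 \<inter> {..<cc - ee}) \<inter> (V0 \<inter> {cc - ee..<cc}) = {}" by auto
  ultimately show ?thesis unfolding N0_def by (simp add: card_Un_disjoint)
qed

lemma pnum_eq: "pnum R v = int (topq 0)"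
  unfolding pnum_def cc_def[symmetric] ee_def[symmetric]
proof (rule the_equality)
  show "int cc - int ee \<le> int (topq 0) * int ee \<and> int (topq 0) * int ee < int cc"
    using topq_bounds[of 0] cc_pos by (simp add: of_nat_mult[symmetric] del: of_nat_mult)
next
  fix p assume "int cc - int ee \<le> p * int ee \<and> p * int ee < int cc"
  moreover have "int cc - int ee \<le> int (topq 0) * int ee \<and> int (topq 0) * int ee < int cc"
    using topq_bounds[of 0] cc_pos by (simp add: of_nat_mult[symmetric] del: of_nat_mult)
  ultimately show "p = int (topq 0)" using int_unique[of "int ee" "int cc"] ee_prop(2) by simp
qed

lemma lnum_eq: assumes y: "y < cc" shows "lnum R v y = int (topq y)"
  unfolding lnum_def cc_def[symmetric] ee_def[symmetric]
proof (rule the_equality)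
  have b: "y + topq y * ee < cc" "cc \<le> y + topq y * ee + ee" using topq_bounds[OF y] by auto
  show "0 \<le> int (topq y) \<and> int y + int (topq y) * int ee < int cc \<and> int cc \<le> int y + (int (topq y) + 1) * int ee"
    using b by (simp add: algebra_simps of_nat_mult[symmetric] del: of_nat_mult)
next
  fix l assume l: "0 \<le> l \<and> int y + l * int ee < int cc \<and> int cc \<le> int y + (l + 1) * int ee"
  have b: "y + topq y * ee < cc" "cc \<le> y + topq y * ee + ee" using topq_bounds[OF y] by auto
  have "int cc - int y - int ee \<le> l * int ee" "l * int ee < int cc - int y" using l by (auto simp: algebra_simps)
  moreover have "int cc - int y - int ee \<le> int (topq y) * int ee" "int (topq y) * int ee < int cc - int y"
    using b by (simp_all add: of_nat_mult[symmetric] del: of_nat_mult)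
  ultimately show "l = int (topq y)" using int_unique[of "int ee" "int cc - int y"] ee_prop(2) by simp
qed

end

context setting2 begin

definition cnt where "cnt y = card {z \<in> V0. z < y}"

lemma cnt_fin: "finite {z \<in> V0. z < y}"
  by (rule finite_subset[of _ "{..<y}"]) auto

lemma cnt_strict: "y \<in> V0 \<Longrightarrow> y < y' \<Longrightarrow> cnt y < cnt y'"
  unfolding cnt_def by (rule psubset_card_mono[OF cnt_fin]) auto

lemma cnt_mono: "y \<le> y' \<Longrightarrow> cnt y \<le> cnt y'"
  unfolding cnt_def by (rule card_mono[OF cnt_fin]) auto

lemma cnt_ex: "\<exists>y\<in>V0. cnt y = i"
proof (induction i)
  case 0
  have "cnt 0 = 0" unfolding cnt_def by simp
  then show ?case using V0_0 by blast
next
  case (Suc i)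
  then obtain y where y: "y \<in> V0" "cnt y = i" by blast
  have ex: "y + cc + 1 \<in> V0 \<and> y < y + cc + 1" using cc_ge by simp
  define y' where "y' = (LEAST z. z \<in> V0 \<and> y < z)"
  have y'1: "y' \<in> V0 \<and> y < y'" unfolding y'_def by (rule LeastI[of "\<lambda>z. z \<in> V0 \<and> y < z", OF ex])
  have y'2: "z \<in> V0 \<Longrightarrow> y < z \<Longrightarrow> y' \<le> z" for z unfolding y'_def by (rule Least_le) simp
  have "{z \<in> V0. z < y'} = insert y {z \<in> V0. z < y}"
  proof
    show "{z \<in> V0. z < y'} \<subseteq> insert y {z \<in> V0. z < y}"
    proof
      fix z assume z: "z \<in> {z \<in> V0. z < y'}"
      then have "\<not> y < z" using y'2 by force
      then show "z \<in> insert y {z \<in> V0. z < y}" using z by auto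
    qed
    show "insert y {z \<in> V0. z < y} \<subseteq> {z \<in> V0. z < y'}" using y y'1 by auto
  qed
  then have "cnt y' = Suc (cnt y)" unfolding cnt_def using cnt_fin by simp
  then show ?case using y y'1 by auto
qed

lemma sval_prop: "sval R v i \<in> V0 \<and> cnt (sval R v i) = i"
  unfolding sval_def cnt_def[symmetric] by (rule LeastI_ex) (use cnt_ex in blast)

lemma cnt_inj: "y \<in> V0 \<Longrightarrow> y' \<in> V0 \<Longrightarrow> cnt y = cnt y' \<Longrightarrow> y = y'"
  using cnt_strict by (metis linorder_neqE_nat less_not_refl)

lemma sval_unique: "y \<in> V0 \<Longrightarrow> cnt y = i \<Longrightarrow> sval R v i = y"
  using cnt_inj sval_prop by metis

lemma sval_mono: "i \<le> j \<Longrightarrow> sval R v i \<le> sval R v j"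
  using cnt_strict sval_prop by (metis not_le leD)

lemma sval0: "sval R v 0 = 0"
  using sval_unique[OF V0_0] unfolding cnt_def by simp

lemma sval_next: assumes i: "1 \<le> i" and u: "u \<in> V0" "sval R v (i - 1) < u" shows "sval R v i \<le> u"
proof (rule ccontr)
  assume "\<not> sval R v i \<le> u"
  then have "cnt u < cnt (sval R v i)" using cnt_strict u by simp
  moreover have "cnt (sval R v (i - 1)) < cnt u" using cnt_strict u sval_prop by blast
  ultimately show False using sval_prop i by (metis Suc_pred' less_Suc_eq_le not_le le_less_trans less_le_not_le One_nat_def gr0I le_zero_eq zero_neq_one)
qed

lemma cnt_cc: "cnt cc = N0"
  unfolding cnt_def N0_def by (rule arg_cong[of _ _ card]) auto

lemma svalN0: "sval R v N0 = cc"
  using sval_unique[OF cc_in cnt_cc] .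

definition m0 where "m0 = (LEAST y. y \<in> V0 \<and> int cc - int ee \<le> int y)"

lemma m0_prop: "m0 \<in> V0" "cc - ee \<le> m0" "\<And>y. y \<in> V0 \<Longrightarrow> cc - ee \<le> y \<Longrightarrow> m0 \<le> y" "m0 < cc"
proof -
  have ex: "cc \<in> V0 \<and> int cc - int ee \<le> int cc" using cc_in by simp
  have "m0 \<in> V0 \<and> int cc - int ee \<le> int m0" unfolding m0_def by (rule LeastI[of "\<lambda>y. y \<in> V0 \<and> int cc - int ee \<le> int y", OF ex])
  then show "m0 \<in> V0" "cc - ee \<le> m0" by auto
  show le: "\<And>y. y \<in> V0 \<Longrightarrow> cc - ee \<le> y \<Longrightarrow> m0 \<le> y" unfolding m0_def
    by (rule Least_le) (use ee_le_cc in auto)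
  have "topq 0 * ee \<in> V0" by (rule multV0)
  moreover have "cc - ee \<le> topq 0 * ee" "topq 0 * ee < cc" using topq_bounds[of 0] cc_pos by auto
  ultimately show "m0 < cc" using le by fastforce
qed

lemma cnt_m0: "cnt m0 = card (V0 \<inter> {..<cc - ee})"
  unfolding cnt_def
proof (rule arg_cong[of _ _ card])
  show "{z \<in> V0. z < m0} = V0 \<inter> {..<cc - ee}"
    using m0_prop by force
qed

lemma i0_eq: "i_zero R v = cnt m0 + 1"
  unfolding i_zero_def cc_def[symmetric] ee_def[symmetric] m0_def[symmetric] nnum_eq
proof (rule the_equality)
  have "cnt m0 < N0" using cnt_strict[OF m0_prop(1) m0_prop(4)] cnt_cc by simp
  moreover have "sval R v (cnt m0) = m0" using sval_unique[OF m0_prop(1)] by simp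
  ultimately show "1 \<le> cnt m0 + 1 \<and> int (cnt m0 + 1) \<le> int N0 \<and> int (sval R v (cnt m0 + 1 - 1)) = int m0"
    by simp
next
  fix i assume h: "1 \<le> i \<and> int i \<le> int N0 \<and> int (sval R v (i - 1)) = int m0"
  then have "cnt m0 = i - 1" using sval_prop by (metis of_nat_eq_iff)
  then show "i = cnt m0 + 1" using h by simp
qed

lemma i0_le: "cnt m0 < N0"
  using cnt_strict[OF m0_prop(1) m0_prop(4)] cnt_cc by simp

lemma setA_eq: "setA R v = {1..<cnt m0 + 1}"
  unfolding setA_def nnum_eq i0_eq using i0_le by auto

lemma card_setA: "card (setA R v) = card (V0 \<inter> {..<cc - ee})"
  using setA_eq cnt_m0 by simp

abbreviation Ci where "Ci i \<equiv> colon R (Rsub R v i)"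

lemma Rsub_R: "Rsub R v i \<subseteq> R" unfolding Rsub_def by auto

lemma Rsub_anti: "i \<le> j \<Longrightarrow> Rsub R v j \<subseteq> Rsub R v i"
  unfolding Rsub_def using sval_mono by force

lemma Rsub0: "Rsub R v 0 = R"
  unfolding Rsub_def sval0 using Rv by auto

lemma colon_RR: "colon R R = R"
proof
  show "colon R R \<subseteq> R" unfolding colon_def using R1 by force
  show "R \<subseteq> colon R R" by (rule R_colon) simp
qed

lemma Cset_Rsub: "i \<le> N0 \<Longrightarrow> Cset (int cc) \<subseteq> Rsub R v i"
proof
  fix w assume i: "i \<le> N0" and w: "w \<in> Cset (int cc)"
  have "sval R v i \<le> cc" using sval_mono[OF i] svalN0 by simp
  then show "w \<in> Rsub R v i" using w Cset_R_sub unfolding Rsub_def Cset_def by auto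
qed

lemma Ci_props: assumes "i \<le> N0"
  shows "submod R (Ci i)" "R \<subseteq> Ci i" "Ci i \<subseteq> VR"
  using submod_colon R_colon[OF Rsub_R] colon_VR[OF Cset_Rsub[OF assms]] by auto

lemma Ci_mono: "i \<le> j \<Longrightarrow> Ci i \<subseteq> Ci j"
  using colon_anti[OF Rsub_anti] .

lemma rr_eq: assumes i: "1 \<le> i" "i \<le> N0"
  shows "rr R v i = card (vals v (Ci i) - vals v (Ci (i - 1)))"
    and "card (vals v (Ci i) - vals v (Ci (i - 1))) \<in> chains (Ci (i - 1)) (Ci i)"
proof -
  have p: "submod R (Ci (i - 1))" "submod R (Ci i)" "Ci i \<subseteq> VR" "Ci (i - 1) \<subseteq> Ci i"
    using Ci_props[of i] Ci_props[of "i - 1"] Ci_mono[of "i - 1" i] i Cset_R_sub by auto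
  have "Cset (int cc) \<subseteq> Ci (i - 1)" using subset_trans[OF Cset_R_sub Ci_props(2)[of "i - 1"]] i by simp
  note p = p this
  show "rr R v i = card (vals v (Ci i) - vals v (Ci (i - 1)))"
    unfolding rr_def by (rule ell_eq(1)[OF p])
  show "card (vals v (Ci i) - vals v (Ci (i - 1))) \<in> chains (Ci (i - 1)) (Ci i)"
    by (rule ell_eq(2)[OF p])
qed

lemma W0: "vals v (Ci 0) = V0"
  unfolding Rsub0 colon_RR vR_def ..

lemma Wfin: "finite (vals v X - V0)"
  using fin_diff(2)[OF Cset_R_sub] unfolding vR_def .

lemma telescope: "m \<le> N0 \<Longrightarrow> (\<Sum>i\<in>{1..<m+1}. card (vals v (Ci i) - vals v (Ci (i - 1)))) = card (vals v (Ci m) - V0)"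
proof (induction m)
  case 0 then show ?case using W0 by simp
next
  case (Suc m)
  have s1: "V0 \<subseteq> vals v (Ci m)" using vals_mono[OF Ci_mono[of 0 m]] W0 by simp
  have s2: "vals v (Ci m) \<subseteq> vals v (Ci (Suc m))" using vals_mono[OF Ci_mono[of m "Suc m"]] by simp
  have eq: "vals v (Ci (Suc m)) - V0 = (vals v (Ci m) - V0) \<union> (vals v (Ci (Suc m)) - vals v (Ci m))"
    using s1 s2 by blast
  have "vals v (Ci (Suc m)) - vals v (Ci m) \<subseteq> vals v (Ci (Suc m)) - V0" using s1 by blast
  then have f2: "finite (vals v (Ci (Suc m)) - vals v (Ci m))"
    using Wfin[of "Ci (Suc m)"] by (rule finite_subset)
  have "card (vals v (Ci (Suc m)) - V0) = card (vals v (Ci m) - V0) + card (vals v (Ci (Suc m)) - vals v (Ci m))"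
    unfolding eq by (rule card_Un_disjoint[OF Wfin f2]) blast
  moreover have "{1..<Suc m + 1} = insert (Suc m) {1..<m+1}" by auto
  ultimately show ?case using Suc by simp
qed

lemma sum_rr: "(\<Sum>i\<in>setA R v. int (rr R v i)) = int (card (vals v (Ci (cnt m0)) - V0))"
proof -
  have "(\<Sum>i\<in>setA R v. rr R v i) = (\<Sum>i\<in>{1..<cnt m0+1}. card (vals v (Ci i) - vals v (Ci (i - 1))))"
    unfolding setA_eq using rr_eq(1) i0_le by (intro sum.cong) auto
  also have "\<dots> = card (vals v (Ci (cnt m0)) - V0)" using telescope i0_le by simp
  finally show ?thesis by (simp add: of_nat_sum[symmetric])
qed

lemma gaps_in_W: "{ee..<cc} - V0 \<subseteq> vals v (Ci (cnt m0)) - V0"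
proof
  fix g assume g: "g \<in> {ee..<cc} - V0"
  have sv: "sval R v (cnt m0) = m0" using sval_unique[OF m0_prop(1)] by simp
  have "tt ^ g \<in> Ci (cnt m0)" unfolding colon_def
  proof (intro CollectI ballI)
    fix w assume w: "w \<in> Rsub R v (cnt m0)"
    show "tt ^ g * w \<in> R"
    proof (cases "w = 0")
      case True then show ?thesis using R0 by simp
    next
      case False
      then have "int m0 \<le> v w" using w sv unfolding Rsub_def by auto
      moreover have "cc \<le> m0 + ee" using m0_prop(2) ee_le_cc by linarith
      ultimately have "int cc \<le> v (tt ^ g * w)" using vmult[OF ttpow(1) False] ttpow(2) g by simp
      then show ?thesis using Cset_R_sub unfolding Cset_def by blast
    qed
  qed
  then show "g \<in> vals v (Ci (cnt m0)) - V0" using valsI[of "tt^g"] ttpow g by fastforce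
qed

lemma card_gaps: "card ({ee..<cc} - V0) + (ee - 1) = card ({..<cc} - V0)"
proof -
  have eq: "{..<cc} - V0 = {1..<ee} \<union> ({ee..<cc} - V0)"
  proof
    show "{..<cc} - V0 \<subseteq> {1..<ee} \<union> ({ee..<cc} - V0)"
    proof
      fix y assume y: "y \<in> {..<cc} - V0"
      then have "y \<noteq> 0" using V0_0 by (metis DiffD2)
      then show "y \<in> {1..<ee} \<union> ({ee..<cc} - V0)" using y by (cases "y < ee") auto
    qed
    show "{1..<ee} \<union> ({ee..<cc} - V0) \<subseteq> {..<cc} - V0"
      using ee_prop(3) ee_le_cc by force
  qed
  have "card ({..<cc} - V0) = card {1..<ee} + card ({ee..<cc} - V0)"
    unfolding eq by (rule card_Un_disjoint) auto
  then show ?thesis by simp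
qed

definition tr where "tr = type_r R"

lemma tr_eq: "tr = card (vals v (colon R (max_ideal R)) - V0)"
  and tr_chain: "\<And>n. n \<in> chains R (colon R (max_ideal R)) \<Longrightarrow> n \<le> card (vals v (colon R (max_ideal R)) - V0)"
proof -
  have p: "submod R R" "submod R (colon R (max_ideal R))" "colon R (max_ideal R) \<subseteq> VR"
    "R \<subseteq> colon R (max_ideal R)" "Cset (int cc) \<subseteq> R"
    using submod_R submod_colon colon_VR[OF Cset_m] R_colon[of "max_ideal R"] mchar Cset_R_sub by auto
  show "tr = card (vals v (colon R (max_ideal R)) - V0)"
    unfolding tr_def type_r_def vR_def by (rule ell_eq(1)[OF p])
  show "\<And>n. n \<in> chains R (colon R (max_ideal R)) \<Longrightarrow> n \<le> card (vals v (colon R (max_ideal R)) - V0)"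
    unfolding vR_def by (rule ell_eq(3)[OF p])
qed

lemma tr_lower: "{cc - ee..<cc} - V0 \<subseteq> vals v (colon R (max_ideal R)) - V0"
proof
  fix g assume g: "g \<in> {cc - ee..<cc} - V0"
  have "tt ^ g \<in> colon R (max_ideal R)" unfolding colon_def
  proof (intro CollectI ballI)
    fix w assume w: "w \<in> max_ideal R"
    show "tt ^ g * w \<in> R"
    proof (cases "w = 0")
      case True then show ?thesis using R0 by simp
    next
      case False
      then have "int ee \<le> v w" using m_val w by blast
      moreover have "cc \<le> g + ee" using g ee_le_cc by auto
      ultimately have "int cc \<le> v (tt ^ g * w)" using vmult[OF ttpow(1) False] ttpow(2) by simp
      then show ?thesis using Cset_R_sub unfolding Cset_def by blast
    qed
  qed
  then show "g \<in> vals v (colon R (max_ideal R)) - V0" using valsI[of "tt^g"] ttpow g by fastforce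
qed

lemma tr_ge: "ee - card (V0 \<inter> {cc - ee..<cc}) \<le> tr" "1 \<le> tr"
proof -
  have c: "card {cc - ee..<cc} = card ({cc - ee..<cc} \<inter> V0) + card ({cc - ee..<cc} - V0)"
    by (rule card_Int_Diff) simp
  have "card {cc - ee..<cc} = ee" using ee_le_cc by simp
  moreover have "{cc - ee..<cc} \<inter> V0 = V0 \<inter> {cc - ee..<cc}" by blast
  ultimately have e: "card ({cc - ee..<cc} - V0) = ee - card (V0 \<inter> {cc - ee..<cc})" using c by simp
  have "card ({cc - ee..<cc} - V0) \<le> tr" unfolding tr_eq by (rule card_mono[OF Wfin tr_lower])
  then show "ee - card (V0 \<inter> {cc - ee..<cc}) \<le> tr" using e by simp
  have "cc - 1 \<in> {cc - ee..<cc} - V0" using ccm1 cc_pos ee_prop(2) by auto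
  then have "{cc - ee..<cc} - V0 \<noteq> {}" by blast
  then have "0 < card ({cc - ee..<cc} - V0)" by (simp add: card_gt_0_iff)
  then show "1 \<le> tr" using \<open>card ({cc - ee..<cc} - V0) \<le> tr\<close> by simp
qed

lemma above_next: assumes i: "1 \<le> i" and w: "w \<in> R" "w \<noteq> 0" "int (sval R v (i - 1)) < v w"
  shows "w \<in> Rsub R v i"
proof -
  have "nat (v w) \<in> V0" unfolding vR_def by (rule valsI[OF w(1) w(2)])
  moreover have "sval R v (i - 1) < nat (v w)" using w by linarith
  ultimately have "sval R v i \<le> nat (v w)" using sval_next[OF i] by blast
  then show ?thesis using w Rv unfolding Rsub_def by force
qed

lemma rr_le: assumes i: "1 \<le> i" "i \<le> N0" shows "rr R v i \<le> tr"
proof -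
  obtain u where u: "u \<in> R" "u \<noteq> 0" "v u = int (sval R v (i - 1))"
    using sval_prop V0_iff by blast
  have uR: "u \<in> Rsub R v (i - 1)" using u unfolding Rsub_def by simp
  have h1: "\<forall>z\<in>Ci (i - 1). u * z \<in> R" using uR unfolding colon_def by (auto simp: mult.commute)
  have h2: "\<forall>z\<in>Ci i. u * z \<in> R \<longrightarrow> z \<in> Ci (i - 1)"
  proof (intro ballI impI)
    fix z assume z: "z \<in> Ci i" and uz: "u * z \<in> R"
    show "z \<in> Ci (i - 1)" unfolding colon_def
    proof (intro CollectI ballI)
      fix w assume w: "w \<in> Rsub R v (i - 1)"
      have wR: "w \<in> R" using w Rsub_R by blast
      show "z * w \<in> R"
      proof (cases "w = 0")
        case True then show ?thesis using R0 by simp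
      next
        case w0: False
        show ?thesis
        proof (cases "int (sval R v (i - 1)) < v w")
          case True
          then have "w \<in> Rsub R v i" using above_next[OF i(1) wR w0] by blast
          then show ?thesis using z unfolding colon_def by blast
        next
          case False
          then have vw: "v w = v u" using w w0 u unfolding Rsub_def by auto
          define q where "q = w / u"
          have "v q = 0" unfolding q_def using vdiv[OF w0 u(2)] vw by simp
          then have "q \<in> VR" using VR_iff by simp
          then obtain l where l: "l \<in> R" "q - l = 0 \<or> 1 \<le> v (q - l)" using resrat' by blast
          define w' where "w' = w - l * u"
          have w'R: "w' \<in> R" unfolding w'_def using Rdiff[OF wR Rmult[OF l(1) u(1)]] .
          have w'e: "w' = u * (q - l)" unfolding w'_def q_def using u(2) by (simp add: algebra_simps)
          have "z * w' \<in> R"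
          proof (cases "w' = 0")
            case True then show ?thesis using R0 by simp
          next
            case False
            then have ql: "q - l \<noteq> 0" using w'e by auto
            then have "v w' = v u + v (q - l)" using w'e vmult[OF u(2) ql] by simp
            then have "int (sval R v (i - 1)) < v w'" using l ql u by simp
            then have "w' \<in> Rsub R v i" using above_next[OF i(1) w'R False] by blast
            then show ?thesis using z unfolding colon_def by blast
          qed
          moreover have "z * w = l * (u * z) + z * w'" unfolding w'_def by (simp add: algebra_simps)
          ultimately show ?thesis using Radd Rmult[OF l(1) uz] by simp
        qed
      qed
    qed
  qed
  define P where "P = {y + u * z | y z. y \<in> R \<and> z \<in> Ci i}"
  have Ps: "submod R P" unfolding submod_def P_def
  proof (intro conjI ballI)
    have "(0::'a) = 0 + u * 0" by simp
    moreover have "(0::'a) \<in> Ci i" using submodD(1)[OF submod_colon] .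
    ultimately show "0 \<in> {y + u * z |y z. y \<in> R \<and> z \<in> Ci i}" using R0 by blast
  next
    fix p q assume "p \<in> {y + u * z |y z. y \<in> R \<and> z \<in> Ci i}" "q \<in> {y + u * z |y z. y \<in> R \<and> z \<in> Ci i}"
    then obtain y1 z1 y2 z2 where h: "p = y1 + u * z1" "y1 \<in> R" "z1 \<in> Ci i" "q = y2 + u * z2" "y2 \<in> R" "z2 \<in> Ci i" by blast
    have "p + q = (y1 + y2) + u * (z1 + z2)" using h by (simp add: algebra_simps)
    then show "p + q \<in> {y + u * z |y z. y \<in> R \<and> z \<in> Ci i}"
      using Radd[OF h(2) h(5)] submodD(2)[OF submod_colon h(3) h(6)] by blast
  next
    fix r p assume r: "r \<in> R" and "p \<in> {y + u * z |y z. y \<in> R \<and> z \<in> Ci i}"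
    then obtain y z where h: "p = y + u * z" "y \<in> R" "z \<in> Ci i" by blast
    have "r * p = r * y + u * (r * z)" using h by (simp add: algebra_simps)
    then show "r * p \<in> {y + u * z |y z. y \<in> R \<and> z \<in> Ci i}"
      using Rmult[OF r h(2)] submodD(3)[OF submod_colon r h(3)] by blast
  qed
  have RP: "R \<subseteq> P" unfolding P_def
  proof
    fix y assume "y \<in> R"
    moreover have "y = y + u * 0" by simp
    moreover have "(0::'a) \<in> Ci i" using submodD(1)[OF submod_colon] .
    ultimately show "y \<in> {y + u * z |y z. y \<in> R \<and> z \<in> Ci i}" by blast
  qed
  have Pm: "P \<subseteq> colon R (max_ideal R)" unfolding P_def
  proof
    fix p assume "p \<in> {y + u * z |y z. y \<in> R \<and> z \<in> Ci i}"
    then obtain y z where h: "p = y + u * z" "y \<in> R" "z \<in> Ci i" by blast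
    have "y \<in> colon R (max_ideal R)" using h(2) R_colon[of "max_ideal R"] mchar by blast
    moreover have "u * z \<in> colon R (max_ideal R)" unfolding colon_def
    proof (intro CollectI ballI)
      fix w assume w: "w \<in> max_ideal R"
      show "u * z * w \<in> R"
      proof (cases "w = 0")
        case True then show ?thesis using R0 by simp
      next
        case False
        have wR: "w \<in> R" using w mchar by blast
        have "0 < v w" using w False mchar by blast
        then have "int (sval R v (i - 1)) < v (u * w)" using vmult[OF u(2) False] u by simp
        then have "u * w \<in> Rsub R v i" using above_next[OF i(1) Rmult[OF u(1) wR]] u(2) False by simp
        then have "z * (u * w) \<in> R" using h(3) unfolding colon_def by blast
        then show ?thesis by (simp add: algebra_simps)
      qed
    qed
    ultimately show "p \<in> colon R (max_ideal R)" using h(1) submodD(2)[OF submod_colon] by blast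
  qed
  have PVR: "P \<subseteq> VR" using Pm colon_VR[OF Cset_m] by blast
  have "card (vals v (Ci i) - vals v (Ci (i - 1))) \<in> chains R P"
    unfolding P_def
    by (rule chain_map[OF submod_colon submod_R submod_colon h1 h2 rr_eq(2)[OF i]])
  then have "card (vals v (Ci i) - vals v (Ci (i - 1))) \<le> card (vals v P - vals v R)"
    by (rule ell_eq(3)[OF submod_R Ps PVR RP Cset_R_sub])
  also have "\<dots> \<le> card (vals v (colon R (max_ideal R)) - V0)"
    unfolding vR_def by (rule card_mono[OF Wfin[unfolded vR_def]]) (use vals_mono[OF Pm] in blast)
  finally show ?thesis using rr_eq(1)[OF i] tr_eq by simp
qed

end

context setting2 begin

lemma gaps_card: "card ({..<cc} - V0) = cc - N0"
proof -
  have "card {..<cc} = card ({..<cc} \<inter> V0) + card ({..<cc} - V0)"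
    by (rule card_Int_Diff) simp
  moreover have "{..<cc} \<inter> V0 = V0 \<inter> {..<cc}" by blast
  ultimately show ?thesis unfolding N0_def by simp
qed

end

context setting3 begin

lemma main:
  "let b = bnum R v; c = int (cond_c R v); r = int (type_r R); e = int (mult_e R v);
         k = int (knum R v x); p = pnum R v; h = hnum R v;
         Y = Yset R v x; l = lnum R v;
         X1 = (k - 1) * (r - 1);
         Y1 = k - (e - r);
         Z1 = (r + 1) * (p + (\<Sum>y\<in>Y. l y)) + k + h - p * e - 1
     in b = (r + 1) * (\<Sum>y\<in>Y. l y + 1) - (p + 1) * (e - r - 1) + h
      \<and> b = X1 + Y1 + Z1
      \<and> X1 \<ge> 0 \<and> Y1 \<ge> 0
      \<and> Z1 \<ge> (\<Sum>i\<in>setA R v. r - int (rr R v i))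
      \<and> (\<Sum>i\<in>setA R v. r - int (rr R v i)) \<ge> 0
      \<and> c = (p + 1 + (\<Sum>y\<in>Y. l y + 1)) * (r + 1) - b"
proof -
  define K where "K = card (Ap \<inter> {..<cc})"
  define Y where "Y = Ap \<inter> {..<cc} - {0}"
  define SL where "SL = (\<Sum>y\<in>Y. int (topq y))"
  define cY where "cY = int (card Y)"
  define p where "p = int (topq 0)"
  define r where "r = int tr"
  define e where "e = int ee"
  define c where "c = int cc"
  define n where "n = int N0"
  have fY: "finite Y" unfolding Y_def by simp
  have c1: "cond_c R v = cc" "mult_e R v = ee" "type_r R = tr" using cc_def ee_def tr_def by simp_all
  have kk: "int (knum R v x) = int K" using knum_eq K_def by simp
  have YY: "Yset R v x = Y" using Yset_eq Y_def by simp
  have pp: "pnum R v = p" using pnum_eq p_def by simp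
  have ll: "y \<in> Y \<Longrightarrow> lnum R v y = int (topq y)" for y using lnum_eq Y_def by auto
  have bb: "bnum R v = n * r - c + n"
    unfolding bnum_def c1 delta_eq using N0_le by (simp add: n_def r_def c_def of_nat_diff algebra_simps)
  have hh: "hnum R v = (p + 1) * e - c" unfolding hnum_def pp c1 e_def c_def ..
  have sum1: "(\<Sum>y\<in>Yset R v x. lnum R v y + 1) = SL + cY"
    unfolding YY SL_def cY_def using ll by (simp add: sum.distrib)
  have sum0: "(\<Sum>y\<in>Yset R v x. lnum R v y) = SL"
    unfolding YY SL_def using ll by simp
  have A0: "0 \<in> Ap \<inter> {..<cc}" using Ap0 cc_pos by simp
  have nn: "n = p + 1 + SL + cY"
  proof -
    have "N0 = (\<Sum>a\<in>Ap \<inter> {..<cc}. topq a + 1)" by (rule N0_sum)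
    also have "\<dots> = (topq 0 + 1) + (\<Sum>a\<in>Y. topq a + 1)"
      unfolding Y_def by (rule sum.remove[OF _ A0]) simp
    finally have "int N0 = int (topq 0) + 1 + (\<Sum>a\<in>Y. int (topq a)) + int (card Y)"
      by (simp add: sum.distrib of_nat_sum)
    then show ?thesis unfolding n_def p_def SL_def cY_def by simp
  qed
  have KY: "int K = cY + 1"
  proof -
    have "card Y = K - 1" unfolding Y_def K_def using A0 by simp
    moreover have "1 \<le> K" unfolding K_def using A0 by (metis One_nat_def Suc_leI card_gt_0_iff empty_iff finite_Int finite_lessThan)
    ultimately show ?thesis unfolding cY_def by simp
  qed
  have Ktop: "K = card (V0 \<inter> {cc - ee..<cc})" using k_top K_def by simp
  have cA: "int (card (setA R v)) = n - int K"
    using card_setA N0_split Ktop unfolding n_def by simp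
  have rr1: "i \<in> setA R v \<Longrightarrow> rr R v i \<le> tr" for i
    using rr_le setA_eq i0_le by auto
  have sA: "(\<Sum>i\<in>setA R v. r - int (rr R v i)) = (n - int K) * r - int (card (vals v (Ci (cnt m0)) - V0))"
  proof -
    have "(\<Sum>i\<in>setA R v. r - int (rr R v i)) = int (card (setA R v)) * r - (\<Sum>i\<in>setA R v. int (rr R v i))"
      by (simp add: sum_subtractf)
    then show ?thesis unfolding cA sum_rr .
  qed
  have W: "int (card (vals v (Ci (cnt m0)) - V0)) \<ge> c - n - e + 1"
  proof -
    have "card ({ee..<cc} - V0) \<le> card (vals v (Ci (cnt m0)) - V0)"
      by (rule card_mono[OF Wfin gaps_in_W])
    moreover have "card ({ee..<cc} - V0) + (ee - 1) = cc - N0" using card_gaps gaps_card by simp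
    moreover have "1 \<le> ee" using ee_prop(2) by simp
    ultimately show ?thesis unfolding c_def n_def e_def using N0_le by linarith
  qed
  have trk: "r \<ge> e - int K" "r \<ge> 1"
    using tr_ge Ktop unfolding r_def e_def by (auto simp: of_nat_diff)
  have pe: "(p + 1) * e = p * e + e" by (simp add: algebra_simps)
  have Kn: "n - int K = p + SL" using nn KY by simp
  show ?thesis
    unfolding Let_def c1 kk pp hh sum1 sum0 bb
    unfolding r_def[symmetric] e_def[symmetric] c_def[symmetric]
  proof (intro conjI)
    show "n * r - c + n = (r + 1) * (SL + cY) - (p + 1) * (e - r - 1) + ((p + 1) * e - c)"
      using nn by (simp add: algebra_simps)
    show "n * r - c + n = (int K - 1) * (r - 1) + (int K - (e - r)) + ((r + 1) * (p + SL) + int K + ((p + 1) * e - c) - p * e - 1)"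
      using nn KY by (simp add: algebra_simps)
    show "0 \<le> (int K - 1) * (r - 1)" using KY trk cY_def by simp
    show "0 \<le> int K - (e - r)" using trk by simp
    show "(\<Sum>i\<in>setA R v. r - int (rr R v i)) \<le> (r + 1) * (p + SL) + int K + ((p + 1) * e - c) - p * e - 1"
    proof -
      have "(r + 1) * (p + SL) = (p + SL) * r + (p + SL)" by (simp add: algebra_simps)
      then show ?thesis unfolding sA Kn using W pe nn KY by linarith
    qed
    show "0 \<le> (\<Sum>i\<in>setA R v. r - int (rr R v i))"
      using rr1 unfolding r_def by (intro sum_nonneg) simp
    show "c = (p + 1 + (SL + cY)) * (r + 1) - (n * r - c + n)"
      using nn by (simp add: algebra_simps)
  qed
qed

end

theorem theorem2p2:
  fixes R :: "'k::field set" and v :: "'k \<Rightarrow> int" and x :: 'k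
  assumes sub: "subring R"
    and qf: "quotient_field_of R"
    and noeth: "noetherian R"
    and loc: "local_ring R"
    and dim1: "krull_dim_one R"
    and nonreg: "\<not> regular_dim_one R"
    and dval: "normalized_dval v"
    and intcl: "integral_closure R = val_ring v"
    and fin: "finite_module R (val_ring v)"
    and resrat: "residually_rational R v"
    and xm: "x \<in> max_ideal R" and xnz: "x \<noteq> 0" and xv: "v x = int (mult_e R v)"
    and k1: "knum R v x > 1"
  shows
    "let b = bnum R v; c = int (cond_c R v); r = int (type_r R); e = int (mult_e R v);
         k = int (knum R v x); p = pnum R v; h = hnum R v;
         Y = Yset R v x; l = lnum R v;
         X1 = (k - 1) * (r - 1);
         Y1 = k - (e - r);
         Z1 = (r + 1) * (p + (\<Sum>y\<in>Y. l y)) + k + h - p * e - 1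
     in b = (r + 1) * (\<Sum>y\<in>Y. l y + 1) - (p + 1) * (e - r - 1) + h
      \<and> b = X1 + Y1 + Z1
      \<and> X1 \<ge> 0 \<and> Y1 \<ge> 0
      \<and> Z1 \<ge> (\<Sum>i\<in>setA R v. r - int (rr R v i))
      \<and> (\<Sum>i\<in>setA R v. r - int (rr R v i)) \<ge> 0
      \<and> c = (p + 1 + (\<Sum>y\<in>Y. l y + 1)) * (r + 1) - b"
proof -
  interpret setting3 R v x
    by unfold_locales (simp_all add: sub dval intcl resrat qf fin loc nonreg xm xnz xv)
  show ?thesis by (rule main)
qed

end
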